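(* Let $C_{(1)}$ and $C_{(3)}$ denote the class sums in $\mathbb Z S_4$ of the transpositions and of the 4-cycles, respectively. A set of two odd monomials $m_\mu(L_1,\dots,L_4)$ (partitions $\mu$ with $|\mu|$ odd and at most three parts) has $\mathbb Z$-span equal to $\mathbb Z C_{(1)}\oplus\mathbb Z C_{(3)}$ if and only if it is $\{m_1,m_{1,1,1}\}$ or $\{m_1,m_3\}$.
   Context: $S_4$ is the symmetric group on $\{1,2,3,4\}$ and $\mathbb Z S_4$ its integral group ring. The Jucys–Murphy elements are $L_1=0$ and $L_i=\sum_{k=1}^{i-1}(k\ i)$ for $i=2,3,4$; they pairwise commute. For a partition $\mu=(\mu_1,\dots,\mu_r)$, $m_\mu(x_1,\dots,x_4)$ is the monomial symmetric polynomial: the sum of all distinct monomials $x_1^{\alpha_1}\cdots x_4^{\alpha_4}$ with $(\alpha_1,\dots,\alpha_4)$ a rearrangement of $(\mu_1,\dots,\mu_r,0,\dots,0)$; subscripts are written without parentheses. For $|\mu|$ odd, $m_\mu(L_1,\dots,L_4)$ is a $\mathbb Z$-linear combination of $C_{(1)}$ and $C_{(3)}$. *)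

theory Defs
  imports "HOL-Combinatorics.Combinatorics" "HOL-Library.Multiset"
begin

definition S4 :: "(nat \<Rightarrow> nat) set" where
  "S4 = {p. p permutes {1..4}}"

text \<open>Elements of the integral group ring Z S_4: integer-valued functions on
  permutations, supported on S4 (coefficient of each group element).\<close>
type_synonym zs4 = "(nat \<Rightarrow> nat) \<Rightarrow> int"

definition gr_basis :: "(nat \<Rightarrow> nat) \<Rightarrow> zs4" where
  "gr_basis p = (\<lambda>g. if g = p then 1 else 0)"

definition gr_zero :: zs4 where "gr_zero = (\<lambda>g. 0)"
definition gr_one :: zs4 where "gr_one = gr_basis id"
definition gr_add :: "zs4 \<Rightarrow> zs4 \<Rightarrow> zs4" where "gr_add x y = (\<lambda>g. x g + y g)"
definition gr_smult :: "int \<Rightarrow> zs4 \<Rightarrow> zs4" where "gr_smult a x = (\<lambda>g. a * x g)"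

text \<open>Convolution product; gr_basis a times gr_basis b = gr_basis (a o b).\<close>
definition gr_mult :: "zs4 \<Rightarrow> zs4 \<Rightarrow> zs4" where
  "gr_mult x y = (\<lambda>g. if g \<in> S4 then (\<Sum>h\<in>S4. x h * y (inv h \<circ> g)) else 0)"

fun gr_pow :: "zs4 \<Rightarrow> nat \<Rightarrow> zs4" where
  "gr_pow x 0 = gr_one"
| "gr_pow x (Suc n) = gr_mult x (gr_pow x n)"

definition gr_sum :: "('i \<Rightarrow> zs4) \<Rightarrow> 'i set \<Rightarrow> zs4" where
  "gr_sum f A = (\<lambda>g. \<Sum>i\<in>A. f i g)"

definition gr_prod_list :: "zs4 list \<Rightarrow> zs4" where
  "gr_prod_list xs = foldr gr_mult xs gr_one"

definition JM :: "nat \<Rightarrow> zs4" where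
  "JM i = gr_sum (\<lambda>k. gr_basis (transpose k i)) {1..<i}"

definition is_partition :: "nat list \<Rightarrow> bool" where
  "is_partition mu \<longleftrightarrow> sorted (rev mu) \<and> (\<forall>x\<in>set mu. 0 < x)"

definition m_JM :: "nat list \<Rightarrow> zs4" where
  "m_JM mu = gr_sum (\<lambda>\<alpha>. gr_prod_list (map (\<lambda>i. gr_pow (JM (i+1)) (\<alpha> ! i)) [0..<4]))
     {\<alpha>. length \<alpha> = 4 \<and> length mu \<le> 4 \<and>
          mset \<alpha> = mset (mu @ replicate (4 - length mu) 0)}"

definition C1 :: zs4 where
  "C1 = gr_sum gr_basis {transpose a b | a b. a \<in> {1..4} \<and> b \<in> {1..4} \<and> a \<noteq> b}"

definition C3 :: zs4 where
  "C3 = gr_sum gr_basis {cycle_of_list cs | cs. distinct cs \<and> set cs = {1..4}}"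

definition Zspan2 :: "zs4 \<Rightarrow> zs4 \<Rightarrow> zs4 set" where
  "Zspan2 x y = {gr_add (gr_smult a x) (gr_smult b y) | a b. True}"

end

theory Submission
  imports Defs
begin


definition pf :: "nat list \<Rightarrow> nat \<Rightarrow> nat" where
  "pf xs i = (if 1 \<le> i \<and> i \<le> 4 then xs!(i-1) else i)"

definition P4 :: "nat list list" where
"P4 = [[1,2,3,4],[1,2,4,3],[1,3,2,4],[1,3,4,2],[1,4,2,3],[1,4,3,2],[2,1,3,4],[2,1,4,3],[2,3,1,4],[2,3,4,1],[2,4,1,3],[2,4,3,1],[3,1,2,4],[3,1,4,2],[3,2,1,4],[3,2,4,1],[3,4,1,2],[3,4,2,1],[4,1,2,3],[4,1,3,2],[4,2,1,3],[4,2,3,1],[4,3,1,2],[4,3,2,1]]"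

lemma set14: "{1..4::nat} = {1,2,3,4}" by auto

lemma mem_P4:
  assumes "distinct cs" "set cs = {1..4::nat}"
  shows "cs \<in> set P4"
proof -
  have "length cs = 4" using distinct_card[OF assms(1)] assms(2) by simp
  then obtain a b c d where cs: "cs = [a,b,c,d]"
    by (cases cs; simp; rename_tac l; case_tac l; simp; rename_tac l; case_tac l; simp;
        rename_tac l; case_tac l; simp)
  have abcd: "a \<in> {1,2,3,4}" "b \<in> {1,2,3,4}" "c \<in> {1,2,3,4}" "d \<in> {1,2,3,4}"
    using assms(2) unfolding cs set14 by auto
  have dis: "distinct [a,b,c,d]" using assms(1) cs by simp
  show ?thesis using abcd dis unfolding cs P4_def
    apply (simp only: insert_iff empty_iff)
    apply (elim disjE FalseE)
    apply (simp_all)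
    done
qed

lemma pf_perm:
  assumes "p permutes {1..4::nat}"
  shows "p = pf (map p [1,2,3,4])"
proof
  fix i show "p i = pf (map p [1,2,3,4]) i"
  proof (cases "i \<in> {1..4}")
    case True then have "i \<in> {1,2,3,4}" by auto
    then show ?thesis by (auto simp: pf_def)
  next
    case False then show ?thesis using permutes_not_in[OF assms] by (auto simp: pf_def)
  qed
qed

lemma P4_props: "xs \<in> set P4 \<Longrightarrow> distinct xs \<and> set xs = {1..4} \<and> length xs = 4"
  unfolding P4_def set14 by auto

lemma pf_permutes:
  assumes "xs \<in> set P4" shows "pf xs permutes {1..4}"
proof -
  have d: "distinct xs" and s: "set xs = {1..4}" and l: "length xs = 4" using P4_props[OF assms] by auto
  have inj: "inj_on (pf xs) {1..4}"
  proof (rule inj_onI)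
    fix i j assume "i \<in> {1..4}" "j \<in> {1..4}" "pf xs i = pf xs j"
    then have "xs!(i-1) = xs!(j-1)" "i-1 < length xs" "j - 1 < length xs" using l by (auto simp: pf_def)
    then show "i = j" using d nth_eq_iff_index_eq \<open>i \<in> {1..4}\<close> \<open>j \<in> {1..4}\<close> by fastforce
  qed
  have img: "pf xs ` {1..4} = {1..4}"
  proof -
    have "pf xs ` {1..4} = (\<lambda>i. xs!(i-1)) ` {1..4}" by (auto simp: pf_def)
    also have "\<dots> = (\<lambda>i. xs!i) ` {0..<4}"
    proof -
      have e: "{0..<4::nat} = {0,1,2,3}" by auto
      show ?thesis unfolding set14 e by simp
    qed
    also have "\<dots> = set xs" using l by (auto simp: set_conv_nth)
    finally show ?thesis using s by simp
  qed
  have "bij_betw (pf xs) {1..4} {1..4}" using inj img by (simp add: bij_betw_def)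
  then show ?thesis
    by (rule bij_imp_permutes) (auto simp: pf_def)
qed

lemma S4_eq: "S4 = pf ` set P4"
proof
  show "S4 \<subseteq> pf ` set P4"
  proof
    fix p assume "p \<in> S4"
    then have pp: "p permutes {1..4}" by (simp add: S4_def)
    have "distinct (map p [1,2,3,4])"
      using permutes_inj[OF pp] by (simp add: inj_eq)
    moreover have "set (map p [1,2,3,4]) = p ` {1..4}" unfolding set14 by simp
    then have "set (map p [1,2,3,4]) = {1..4}" using permutes_image[OF pp] by simp
    ultimately have "map p [1,2,3,4] \<in> set P4" by (rule mem_P4)
    then show "p \<in> pf ` set P4" using pf_perm[OF pp] by blast
  qed
next
  show "pf ` set P4 \<subseteq> S4" using pf_permutes by (auto simp: S4_def)
qed

lemma pf_inj: "xs \<in> set P4 \<Longrightarrow> ys \<in> set P4 \<Longrightarrow> pf xs = pf ys \<Longrightarrow> xs = ys"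
proof -
  assume a: "xs \<in> set P4" "ys \<in> set P4" "pf xs = pf ys"
  have l: "length xs = 4" "length ys = 4" using a P4_props by auto
  have "\<forall>i<4. xs!i = ys!i"
  proof (intro allI impI)
    fix i assume "i < (4::nat)"
    then have "pf xs (i+1) = pf ys (i+1)" using a by simp
    then show "xs!i = ys!i" using \<open>i<4\<close> by (simp add: pf_def)
  qed
  then show "xs = ys" using l by (simp add: nth_equalityI)
qed

definition compL :: "nat list \<Rightarrow> nat list \<Rightarrow> nat list" where
  "compL xs ys = map (\<lambda>j. xs!(j-1)) ys"

lemma pf_comp: "xs \<in> set P4 \<Longrightarrow> ys \<in> set P4 \<Longrightarrow> pf xs \<circ> pf ys = pf (compL xs ys)"
proof
  fix i assume a: "xs \<in> set P4" "ys \<in> set P4"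
  have l: "length xs = 4" "length ys = 4" "set ys = {1..4}" using a P4_props by auto
  show "(pf xs \<circ> pf ys) i = pf (compL xs ys) i"
  proof (cases "1 \<le> i \<and> i \<le> 4")
    case True
    have "i - 1 < length ys" using True l by linarith
    then have m: "ys!(i-1) \<in> set ys" by (rule nth_mem)
    have c: "compL xs ys ! (i-1) = xs!(ys!(i-1) - 1)" using \<open>i - 1 < length ys\<close> by (simp add: compL_def)
    show ?thesis using True l m c by (simp add: pf_def)
  next
    case False
    then have "pf ys i = i" "pf xs i = i" "pf (compL xs ys) i = i" by (auto simp: pf_def)
    then show ?thesis by simp
  qed
qed


lemma perm_S4: "a \<in> S4 \<Longrightarrow> a permutes {1..4}" by (simp add: S4_def)

lemma S4_comp: "a \<in> S4 \<Longrightarrow> b \<in> S4 \<Longrightarrow> a \<circ> b \<in> S4"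
  by (simp add: S4_def permutes_compose)
lemma S4_inv: "a \<in> S4 \<Longrightarrow> inv a \<in> S4"
  by (simp add: S4_def permutes_inv)
lemma S4_id: "id \<in> S4" by (simp add: S4_def permutes_id)

lemma S4_inv_comp: "a \<in> S4 \<Longrightarrow> inv a \<circ> (a \<circ> b) = b"
  using permutes_inv_o(2)[OF perm_S4] by (simp add: o_assoc)
lemma S4_comp_inv: "a \<in> S4 \<Longrightarrow> a \<circ> (inv a \<circ> b) = b"
  using permutes_inv_o(1)[OF perm_S4] by (simp add: o_assoc)

lemma gr_mult_add1: "gr_mult (gr_add x y) z = gr_add (gr_mult x z) (gr_mult y z)"
  by (rule ext) (simp add: gr_mult_def gr_add_def distrib_right sum.distrib)
lemma gr_mult_add2: "gr_mult z (gr_add x y) = gr_add (gr_mult z x) (gr_mult z y)"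
  by (rule ext) (simp add: gr_mult_def gr_add_def distrib_left sum.distrib)
lemma gr_mult_smult1: "gr_mult (gr_smult c x) z = gr_smult c (gr_mult x z)"
  by (rule ext) (simp add: gr_mult_def gr_smult_def sum_distrib_left mult.assoc)
lemma gr_mult_smult2: "gr_mult z (gr_smult c x) = gr_smult c (gr_mult z x)"
  by (rule ext) (simp add: gr_mult_def gr_smult_def sum_distrib_left mult.left_commute)
lemma gr_mult_zero1: "gr_mult gr_zero z = gr_zero"
  by (rule ext) (simp add: gr_mult_def gr_zero_def)
lemma gr_mult_zero2: "gr_mult z gr_zero = gr_zero"
  by (rule ext) (simp add: gr_mult_def gr_zero_def)

lemma gr_mult_sum2: "finite A \<Longrightarrow> gr_mult x (gr_sum f A) = gr_sum (\<lambda>i. gr_mult x (f i)) A"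
proof
  fix g assume A: "finite A"
  show "gr_mult x (gr_sum f A) g = gr_sum (\<lambda>i. gr_mult x (f i)) A g"
  proof (cases "g \<in> S4")
    case True
    then show ?thesis
      by (simp add: gr_mult_def gr_sum_def sum_distrib_left) (rule sum.swap)
  next
    case False then show ?thesis by (simp add: gr_mult_def gr_sum_def)
  qed
qed

lemma gr_mult_supp: "g \<notin> S4 \<Longrightarrow> gr_mult x y g = 0"
  by (simp add: gr_mult_def)

lemma sum_basis: "a \<in> S4 \<Longrightarrow> (\<Sum>h\<in>S4. gr_basis a h * f h) = f a"
proof -
  assume a: "a \<in> S4"
  have "(\<Sum>h\<in>S4. gr_basis a h * f h) = (\<Sum>h\<in>S4. if h = a then f h else 0)"
    by (rule sum.cong) (auto simp: gr_basis_def)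
  also have "\<dots> = f a" using a by (simp add: sum.delta' S4_eq)
  finally show ?thesis .
qed

lemma gr_mult_basis:
  assumes a: "a \<in> S4" and b: "b \<in> S4"
  shows "gr_mult (gr_basis a) (gr_basis b) = gr_basis (a \<circ> b)"
proof
  fix g
  show "gr_mult (gr_basis a) (gr_basis b) g = gr_basis (a \<circ> b) g"
  proof (cases "g \<in> S4")
    case True
    have "gr_mult (gr_basis a) (gr_basis b) g = gr_basis b (inv a \<circ> g)"
      using True a by (simp add: gr_mult_def sum_basis)
    also have "\<dots> = gr_basis (a \<circ> b) g"
    proof -
      have "(inv a \<circ> g = b) = (g = a \<circ> b)"
        using S4_inv_comp[OF a] S4_comp_inv[OF a] by metis
      then show ?thesis by (simp add: gr_basis_def)
    qed
    finally show ?thesis .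
  next
    case False
    then have "g \<noteq> a \<circ> b" using S4_comp[OF a b] by auto
    then show ?thesis using False by (simp add: gr_mult_def gr_basis_def)
  qed
qed

lemma gr_mult_assoc: "gr_mult (gr_mult x y) z = gr_mult x (gr_mult y z)"
proof
  fix g
  show "gr_mult (gr_mult x y) z g = gr_mult x (gr_mult y z) g"
  proof (cases "g \<in> S4")
    case False then show ?thesis by (simp add: gr_mult_def)
  next
    case True
    have fin: "finite S4" unfolding S4_eq by simp
    have "gr_mult (gr_mult x y) z g = (\<Sum>h\<in>S4. (\<Sum>k\<in>S4. x k * y (inv k \<circ> h)) * z (inv h \<circ> g))"
      using True by (simp add: gr_mult_def)
    also have "\<dots> = (\<Sum>k\<in>S4. \<Sum>h\<in>S4. x k * y (inv k \<circ> h) * z (inv h \<circ> g))"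
      by (simp add: sum_distrib_right) (rule sum.swap)
    also have "\<dots> = (\<Sum>k\<in>S4. x k * (\<Sum>m\<in>S4. y m * z (inv m \<circ> (inv k \<circ> g))))"
    proof (rule sum.cong[OF refl])
      fix k assume k: "k \<in> S4"
      have "(\<Sum>m\<in>S4. y m * z (inv m \<circ> (inv k \<circ> g))) = (\<Sum>h\<in>S4. y (inv k \<circ> h) * z (inv (inv k \<circ> h) \<circ> (inv k \<circ> g)))"
        by (rule sum.reindex_bij_witness[where j="\<lambda>m. k \<circ> m" and i="\<lambda>h. inv k \<circ> h"])
           (auto simp: S4_inv_comp S4_comp_inv k S4_comp S4_inv)
      also have "\<dots> = (\<Sum>h\<in>S4. y (inv k \<circ> h) * z (inv h \<circ> g))"
      proof (rule sum.cong[OF refl])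
        fix h assume h: "h \<in> S4"
        have bk: "bij k" "bij h" using k h perm_S4 permutes_bij by blast+
        have "inv (inv k \<circ> h) = inv h \<circ> k"
          using bk by (simp add: o_inv_distrib bij_imp_bij_inv inv_inv_eq)
        then have "inv (inv k \<circ> h) \<circ> (inv k \<circ> g) = inv h \<circ> g"
          using S4_comp_inv[OF k, of g] by (simp add: o_assoc[symmetric])
        then show "y (inv k \<circ> h) * z (inv (inv k \<circ> h) \<circ> (inv k \<circ> g)) = y (inv k \<circ> h) * z (inv h \<circ> g)"
          by simp
      qed
      finally show "(\<Sum>h\<in>S4. x k * y (inv k \<circ> h) * z (inv h \<circ> g)) = x k * (\<Sum>m\<in>S4. y m * z (inv m \<circ> (inv k \<circ> g)))"
        by (simp add: sum_distrib_left mult.assoc)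
    qed
    also have "\<dots> = gr_mult x (gr_mult y z) g"
      using True by (simp add: gr_mult_def S4_comp S4_inv)
    finally show ?thesis .
  qed
qed

lemma gr_mult_one: "(\<And>g. g \<notin> S4 \<Longrightarrow> y g = 0) \<Longrightarrow> gr_mult gr_one y = y"
proof
  fix g assume s: "\<And>g. g \<notin> S4 \<Longrightarrow> y g = 0"
  show "gr_mult gr_one y g = y g"
  proof (cases "g \<in> S4")
    case True
    show ?thesis
      using True S4_id by (simp add: gr_mult_def gr_one_def sum_basis)
  next
    case False then show ?thesis using s by (simp add: gr_mult_def)
  qed
qed

primrec toZ :: "(int \<times> nat list) list \<Rightarrow> zs4" where
  "toZ [] = gr_zero"
| "toZ (x#l) = gr_add (gr_smult (fst x) (gr_basis (pf (snd x)))) (toZ l)"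

definition mulL :: "(int \<times> nat list) list \<Rightarrow> (int \<times> nat list) list \<Rightarrow> (int \<times> nat list) list" where
  "mulL l1 l2 = concat (map (\<lambda>(c,a). map (\<lambda>(d,b). (c*d, compL a b)) l2) l1)"
definition coef :: "(int \<times> nat list) list \<Rightarrow> nat list \<Rightarrow> int" where
  "coef l xs = sum_list (map (\<lambda>(c,ys). if ys = xs then c else 0) l)"
definition okL :: "(int \<times> nat list) list \<Rightarrow> bool" where
  "okL l = list_all (\<lambda>(c,xs). xs \<in> set P4) l"
definition smulL :: "int \<Rightarrow> (int \<times> nat list) list \<Rightarrow> (int \<times> nat list) list" where
  "smulL c l = map (\<lambda>(d,xs). (c*d, xs)) l"
definition eqL :: "(int \<times> nat list) list \<Rightarrow> (int \<times> nat list) list \<Rightarrow> bool" where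
  "eqL l1 l2 = (okL l1 \<and> okL l2 \<and> list_all (\<lambda>xs. coef l1 xs = coef l2 xs) P4)"

lemma toZ_append: "toZ (l1 @ l2) = gr_add (toZ l1) (toZ l2)"
  by (induction l1) (auto simp: gr_add_def gr_zero_def)

lemma toZ_smulL: "toZ (smulL c l) = gr_smult c (toZ l)"
  by (induction l) (auto simp: smulL_def gr_add_def gr_zero_def gr_smult_def algebra_simps)

lemma toZ_apply: "toZ l g = sum_list (map (\<lambda>(c,xs). if g = pf xs then c else 0) l)"
  by (induction l) (auto simp: gr_add_def gr_zero_def gr_smult_def gr_basis_def)

lemma toZ_supp: "okL l \<Longrightarrow> g \<notin> S4 \<Longrightarrow> toZ l g = 0"
  by (induction l) (auto simp: okL_def gr_add_def gr_zero_def gr_smult_def gr_basis_def S4_eq)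

lemma toZ_at: "okL l \<Longrightarrow> xs \<in> set P4 \<Longrightarrow> toZ l (pf xs) = coef l xs"
  by (induction l) (auto simp: okL_def coef_def gr_add_def gr_zero_def gr_smult_def gr_basis_def dest: pf_inj)

lemma eqL_toZ: "eqL l1 l2 \<Longrightarrow> toZ l1 = toZ l2"
proof
  fix g assume e: "eqL l1 l2"
  show "toZ l1 g = toZ l2 g"
  proof (cases "g \<in> S4")
    case True
    then obtain xs where xs: "xs \<in> set P4" "g = pf xs" unfolding S4_eq by blast
    have "coef l1 xs = coef l2 xs" using e xs(1) by (auto simp: eqL_def list_all_iff)
    then show ?thesis using e xs toZ_at by (auto simp: eqL_def)
  next
    case False then show ?thesis using e toZ_supp by (auto simp: eqL_def)
  qed
qed

lemma toZ_mul_basis: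
  assumes "a \<in> set P4" "okL l"
  shows "gr_mult (gr_basis (pf a)) (toZ l) = toZ (map (\<lambda>(d,b). (d, compL a b)) l)"
  using assms(2)
proof (induction l)
  case Nil then show ?case by (simp add: gr_mult_zero2)
next
  case (Cons x l)
  obtain d b where x: "x = (d,b)" by (cases x)
  have b: "b \<in> set P4" using Cons.prems x by (simp add: okL_def)
  have ok: "okL l" using Cons.prems by (simp add: okL_def)
  show ?case using Cons.IH[OF ok] x b assms(1)
    by (simp add: gr_mult_add2 gr_mult_smult2 gr_mult_basis S4_eq pf_comp)
qed

lemma toZ_mulL:
  assumes "okL l1" "okL l2"
  shows "gr_mult (toZ l1) (toZ l2) = toZ (mulL l1 l2)"
  using assms(1)
proof (induction l1)
  case Nil then show ?case by (simp add: gr_mult_zero1 mulL_def)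
next
  case (Cons x l)
  obtain c a where x: "x = (c,a)" by (cases x)
  have a: "a \<in> set P4" using Cons.prems x by (simp add: okL_def)
  have ok: "okL l" using Cons.prems by (simp add: okL_def)
  have m: "mulL ((c,a)#l) l2 = smulL c (map (\<lambda>(d,b). (d, compL a b)) l2) @ mulL l l2"
    by (simp add: mulL_def smulL_def comp_def case_prod_beta)
  show ?case using Cons.IH[OF ok] x
    by (simp add: m toZ_append toZ_smulL gr_mult_add1 gr_mult_smult1 toZ_mul_basis[OF a assms(2)])
qed


definition FL0 :: "(int \<times> nat list) list" where "FL0 = [(720,[1,2,3,4]), (720,[1,2,4,3]), (720,[1,3,2,4]), (720,[1,3,4,2]), (720,[1,4,2,3]), (720,[1,4,3,2]), (720,[2,1,3,4]), (720,[2,1,4,3]), (720,[2,3,1,4]), (720,[2,3,4,1]), (720,[2,4,1,3]), (720,[2,4,3,1]), (720,[3,1,2,4]), (720,[3,1,4,2]), (720,[3,2,1,4]), (720,[3,2,4,1]), (720,[3,4,1,2]), (720,[3,4,2,1]), (720,[4,1,2,3]), (720,[4,1,3,2]), (720,[4,2,1,3]), (720,[4,2,3,1]), (720,[4,3,1,2]), (720,[4,3,2,1])]"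
definition FL1 :: "(int \<times> nat list) list" where "FL1 = [(144,[1,2,3,4]), (-48,[1,2,4,3]), (144,[1,3,2,4]), (-48,[1,3,4,2]), (-48,[1,4,2,3]), (-48,[1,4,3,2]), (144,[2,1,3,4]), (-48,[2,1,4,3]), (144,[2,3,1,4]), (-48,[2,3,4,1]), (-48,[2,4,1,3]), (-48,[2,4,3,1]), (144,[3,1,2,4]), (-48,[3,1,4,2]), (144,[3,2,1,4]), (-48,[3,2,4,1]), (-48,[3,4,1,2]), (-48,[3,4,2,1]), (-48,[4,1,2,3]), (-48,[4,1,3,2]), (-48,[4,2,1,3]), (-48,[4,2,3,1]), (-48,[4,3,1,2]), (-48,[4,3,2,1])]"
definition FL2 :: "(int \<times> nat list) list" where "FL2 = [(-180,[1,2,3,4]), (-60,[1,2,4,3]), (90,[1,3,2,4]), (30,[1,3,4,2]), (30,[1,4,2,3]), (-150,[1,4,3,2]), (-180,[2,1,3,4]), (-60,[2,1,4,3]), (90,[2,3,1,4]), (30,[2,3,4,1]), (30,[2,4,1,3]), (-150,[2,4,3,1]), (90,[3,1,2,4]), (30,[3,1,4,2]), (90,[3,2,1,4]), (30,[3,2,4,1]), (120,[3,4,1,2]), (120,[3,4,2,1]), (30,[4,1,2,3]), (-150,[4,1,3,2]), (30,[4,2,1,3]), (-150,[4,2,3,1]), (120,[4,3,1,2]), (120,[4,3,2,1])]"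
definition FL3 :: "(int \<times> nat list) list" where "FL3 = [(-180,[1,2,3,4]), (-180,[1,2,4,3]), (-90,[1,3,2,4]), (-90,[1,3,4,2]), (-90,[1,4,2,3]), (-90,[1,4,3,2]), (180,[2,1,3,4]), (180,[2,1,4,3]), (90,[2,3,1,4]), (90,[2,3,4,1]), (90,[2,4,1,3]), (90,[2,4,3,1]), (90,[3,1,2,4]), (90,[3,1,4,2]), (-90,[3,2,1,4]), (-90,[3,2,4,1]), (90,[4,1,2,3]), (90,[4,1,3,2]), (-90,[4,2,1,3]), (-90,[4,2,3,1])]"
definition FL4 :: "(int \<times> nat list) list" where "FL4 = [(-36,[1,2,3,4]), (-36,[1,2,4,3]), (18,[1,3,2,4]), (18,[1,3,4,2]), (18,[1,4,2,3]), (18,[1,4,3,2]), (-36,[2,1,3,4]), (-36,[2,1,4,3]), (18,[2,3,1,4]), (18,[2,3,4,1]), (18,[2,4,1,3]), (18,[2,4,3,1]), (18,[3,1,2,4]), (18,[3,1,4,2]), (18,[3,2,1,4]), (18,[3,2,4,1]), (-36,[3,4,1,2]), (-36,[3,4,2,1]), (18,[4,1,2,3]), (18,[4,1,3,2]), (18,[4,2,1,3]), (18,[4,2,3,1]), (-36,[4,3,1,2]), (-36,[4,3,2,1])]"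
definition FL5 :: "(int \<times> nat list) list" where "FL5 = [(-36,[1,2,3,4]), (36,[1,2,4,3]), (-18,[1,3,2,4]), (18,[1,3,4,2]), (18,[1,4,2,3]), (-18,[1,4,3,2]), (36,[2,1,3,4]), (-36,[2,1,4,3]), (18,[2,3,1,4]), (-18,[2,3,4,1]), (-18,[2,4,1,3]), (18,[2,4,3,1]), (18,[3,1,2,4]), (-18,[3,1,4,2]), (-18,[3,2,1,4]), (18,[3,2,4,1]), (-36,[3,4,1,2]), (36,[3,4,2,1]), (-18,[4,1,2,3]), (18,[4,1,3,2]), (18,[4,2,1,3]), (-18,[4,2,3,1]), (36,[4,3,1,2]), (-36,[4,3,2,1])]"
definition FL6 :: "(int \<times> nat list) list" where "FL6 = [(-180,[1,2,3,4]), (180,[1,2,4,3]), (90,[1,3,2,4]), (-90,[1,3,4,2]), (-90,[1,4,2,3]), (90,[1,4,3,2]), (-180,[2,1,3,4]), (180,[2,1,4,3]), (90,[2,3,1,4]), (-90,[2,3,4,1]), (-90,[2,4,1,3]), (90,[2,4,3,1]), (90,[3,1,2,4]), (-90,[3,1,4,2]), (90,[3,2,1,4]), (-90,[3,2,4,1]), (-90,[4,1,2,3]), (90,[4,1,3,2]), (-90,[4,2,1,3]), (90,[4,2,3,1])]"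
definition FL7 :: "(int \<times> nat list) list" where "FL7 = [(-180,[1,2,3,4]), (60,[1,2,4,3]), (-90,[1,3,2,4]), (30,[1,3,4,2]), (30,[1,4,2,3]), (150,[1,4,3,2]), (180,[2,1,3,4]), (-60,[2,1,4,3]), (90,[2,3,1,4]), (-30,[2,3,4,1]), (-30,[2,4,1,3]), (-150,[2,4,3,1]), (90,[3,1,2,4]), (-30,[3,1,4,2]), (-90,[3,2,1,4]), (30,[3,2,4,1]), (120,[3,4,1,2]), (-120,[3,4,2,1]), (-30,[4,1,2,3]), (-150,[4,1,3,2]), (30,[4,2,1,3]), (150,[4,2,3,1]), (-120,[4,3,1,2]), (120,[4,3,2,1])]"
definition FL8 :: "(int \<times> nat list) list" where "FL8 = [(144,[1,2,3,4]), (48,[1,2,4,3]), (-144,[1,3,2,4]), (-48,[1,3,4,2]), (-48,[1,4,2,3]), (48,[1,4,3,2]), (-144,[2,1,3,4]), (-48,[2,1,4,3]), (144,[2,3,1,4]), (48,[2,3,4,1]), (48,[2,4,1,3]), (-48,[2,4,3,1]), (144,[3,1,2,4]), (48,[3,1,4,2]), (-144,[3,2,1,4]), (-48,[3,2,4,1]), (-48,[3,4,1,2]), (48,[3,4,2,1]), (48,[4,1,2,3]), (-48,[4,1,3,2]), (-48,[4,2,1,3]), (48,[4,2,3,1]), (48,[4,3,1,2]), (-48,[4,3,2,1])]"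
definition FL9 :: "(int \<times> nat list) list" where "FL9 = [(720,[1,2,3,4]), (-720,[1,2,4,3]), (-720,[1,3,2,4]), (720,[1,3,4,2]), (720,[1,4,2,3]), (-720,[1,4,3,2]), (-720,[2,1,3,4]), (720,[2,1,4,3]), (720,[2,3,1,4]), (-720,[2,3,4,1]), (-720,[2,4,1,3]), (720,[2,4,3,1]), (720,[3,1,2,4]), (-720,[3,1,4,2]), (-720,[3,2,1,4]), (720,[3,2,4,1]), (720,[3,4,1,2]), (-720,[3,4,2,1]), (-720,[4,1,2,3]), (720,[4,1,3,2]), (720,[4,2,1,3]), (-720,[4,2,3,1]), (-720,[4,3,1,2]), (720,[4,3,2,1])]"


definition FLs :: "(int \<times> nat list) list list" where
  "FLs = [FL0,FL1,FL2,FL3,FL4,FL5,FL6,FL7,FL8,FL9]"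
definition contL :: "int list list" where
  "contL = [[0,1,2,3],[0,1,2,-1],[0,1,-1,2],[0,-1,1,2],[0,1,-1,0],[0,-1,1,0],[0,1,-1,-2],[0,-1,1,-2],[0,-1,-2,1],[0,-1,-2,-3]]"
definition wtL :: "int list" where
  "wtL = [1,15,-12,-12,-40,-40,-12,-12,15,1]"
definition jmL :: "nat \<Rightarrow> (int \<times> nat list) list" where
  "jmL k = (if k = 2 then [(1,[2,1,3,4])] else if k = 3 then [(1,[3,2,1,4]),(1,[1,3,2,4])]
     else if k = 4 then [(1,[4,2,3,1]),(1,[1,4,3,2]),(1,[1,2,4,3])] else [])"
definition C1L :: "nat list list" where
  "C1L = [[1, 2, 4, 3], [1, 3, 2, 4], [1, 4, 3, 2], [2, 1, 3, 4], [3, 2, 1, 4], [4, 2, 3, 1]]"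
definition C3L :: "nat list list" where
  "C3L = [[2, 3, 4, 1], [2, 4, 1, 3], [3, 1, 4, 2], [3, 4, 2, 1], [4, 1, 2, 3], [4, 3, 1, 2]]"
definition oneL :: "(int \<times> nat list) list" where "oneL = [(1,[1,2,3,4])]"
definition G1L where "G1L = FL0 @ smulL (-1) FL9"
definition G2L where "G2L = smulL 15 FL1 @ smulL (-12) FL2 @ smulL (-12) FL3 @ smulL 12 FL6 @ smulL 12 FL7 @ smulL (-15) FL8"

lemma chk1: "list_all (\<lambda>t. okL (FLs!t) \<and> list_all (\<lambda>k. eqL (mulL (jmL k) (FLs!t)) (smulL (contL!t!(k-1)) (FLs!t))) [1,2,3,4]) [0..<10]"
  by code_simp
lemma chk2: "eqL (concat (map (\<lambda>t. smulL (wtL!t) (FLs!t)) [0..<10])) (smulL 17280 oneL)"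
  by code_simp
lemma chk3: "eqL (smulL 12 G1L) (smulL 17280 (map (\<lambda>l. (1,l)) C1L @ map (\<lambda>l. (1,l)) C3L))"
  by code_simp
lemma chk4: "eqL (smulL 4 G2L) (smulL 17280 (map (\<lambda>l. (1,l)) C1L @ smulL (-1) (map (\<lambda>l. (1,l)) C3L)))"
  by code_simp
lemma chk5: "okL (map (\<lambda>l. (1,l)) C1L) \<and> okL (map (\<lambda>l. (1,l)) C3L) \<and> okL oneL \<and> distinct C1L \<and> distinct C3L
   \<and> (\<forall>k. okL (jmL k))"
  by (simp add: okL_def C1L_def C3L_def oneL_def jmL_def P4_def)


lemma C3set: "set (map (\<lambda>cs. map (cycle_of_list cs) [1,2,3,4]) P4) = set C3L"
  by code_simp

lemma C1set: "(\<lambda>(a,b). map (transpose a b) [1,2,3,4]) ` {(1,2),(1,3),(1,4),(2,3),(2,4),(3,4)} = set C1L"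
  by code_simp


lemma transp_pf: "a \<in> {1..4} \<Longrightarrow> b \<in> {1..4} \<Longrightarrow> transpose a b = pf (map (transpose a b) [1,2,3,4])"
  by (rule pf_perm) (simp add: permutes_swap_id)

lemma gr_sum_basis_list:
  assumes "distinct ls" "set ls \<subseteq> set P4"
  shows "gr_sum gr_basis (pf ` set ls) = toZ (map (\<lambda>l. (1,l)) ls)"
proof
  fix g
  have inj: "inj_on pf (set ls)" using assms(2) pf_inj by (meson inj_onI subsetD)
  have "gr_sum gr_basis (pf ` set ls) g = (\<Sum>l\<in>set ls. gr_basis (pf l) g)"
    by (simp add: gr_sum_def sum.reindex[OF inj])
  also have "\<dots> = sum_list (map (\<lambda>l. gr_basis (pf l) g) ls)"
    using assms(1) by (simp add: sum_list_distinct_conv_sum_set)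
  also have "\<dots> = toZ (map (\<lambda>l. (1,l)) ls) g"
    by (simp add: toZ_apply gr_basis_def comp_def eq_commute)
  finally show "gr_sum gr_basis (pf ` set ls) g = toZ (map (\<lambda>l. (1,l)) ls) g" .
qed

lemma C3_eq: "C3 = toZ (map (\<lambda>l. (1,l)) C3L)"
proof -
  have "{cycle_of_list cs |cs. distinct cs \<and> set cs = {1..4::nat}} = (\<lambda>cs. cycle_of_list cs) ` set P4"
  proof (intro equalityI subsetI)
    fix x assume "x \<in> {cycle_of_list cs |cs. distinct cs \<and> set cs = {1..4::nat}}"
    then obtain cs where "x = cycle_of_list cs" "distinct cs" "set cs = {1..4}" by blast
    then show "x \<in> (\<lambda>cs. cycle_of_list cs) ` set P4" using mem_P4 by blast
  next
    fix x assume "x \<in> (\<lambda>cs. cycle_of_list cs) ` set P4"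
    then obtain cs where "x = cycle_of_list cs" "cs \<in> set P4" by blast
    then show "x \<in> {cycle_of_list cs |cs. distinct cs \<and> set cs = {1..4::nat}}" using P4_props by blast
  qed
  also have "\<dots> = (\<lambda>cs. pf (map (cycle_of_list cs) [1,2,3,4])) ` set P4"
  proof (rule image_cong[OF refl])
    fix cs assume "cs \<in> set P4"
    then have "cycle_of_list cs permutes {1..4}" using cycle_permutes P4_props by metis
    then show "cycle_of_list cs = pf (map (cycle_of_list cs) [1, 2, 3, 4])" by (rule pf_perm)
  qed
  also have "\<dots> = pf ` set (map (\<lambda>cs. map (cycle_of_list cs) [1,2,3,4]) P4)"
    by (simp add: image_image)
  also have "\<dots> = pf ` set C3L" by (simp only: C3set)
  finally have e: "{cycle_of_list cs |cs. distinct cs \<and> set cs = {1..4::nat}} = pf ` set C3L" .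
  have "set C3L \<subseteq> set P4" using chk5 by (auto simp: okL_def list_all_iff)
  then show ?thesis unfolding C3_def e using gr_sum_basis_list chk5 by blast
qed

lemma C1_eq: "C1 = toZ (map (\<lambda>l. (1,l)) C1L)"
proof -
  let ?Pr = "{(1,2),(1,3),(1,4),(2,3),(2,4),(3,4)} :: (nat \<times> nat) set"
  have "{transpose a b | a b. a \<in> {1..4::nat} \<and> b \<in> {1..4} \<and> a \<noteq> b} = (\<lambda>(a,b). transpose a b) ` ?Pr"
  proof (intro equalityI subsetI)
    fix x assume "x \<in> {transpose a b | a b. a \<in> {1..4::nat} \<and> b \<in> {1..4} \<and> a \<noteq> b}"
    then obtain a b where ab: "x = transpose a b" "a \<in> {1..4}" "b \<in> {1..4}" "a \<noteq> b" by blast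
    show "x \<in> (\<lambda>(a,b). transpose a b) ` ?Pr"
    proof (cases "a < b")
      case True
      then have "(a,b) \<in> ?Pr" using ab(2,3) by auto
      then show ?thesis using ab(1) by force
    next
      case False
      then have "(b,a) \<in> ?Pr" using ab(2,3,4) by auto
      then show ?thesis using ab(1) transpose_commute[of a b] by force
    qed
  next
    fix x assume "x \<in> (\<lambda>(a,b). transpose a b) ` ?Pr"
    then obtain a b where "x = transpose a b" "(a,b) \<in> ?Pr" by auto
    moreover then have "a \<in> {1..4::nat} \<and> b \<in> {1..4} \<and> a \<noteq> b" by auto
    ultimately show "x \<in> {transpose a b | a b. a \<in> {1..4::nat} \<and> b \<in> {1..4} \<and> a \<noteq> b}"
      by blast
  qed
  also have "\<dots> = (\<lambda>(a,b). pf (map (transpose a b) [1,2,3,4])) ` ?Pr"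
  proof (rule image_cong[OF refl])
    fix x assume "x \<in> ?Pr"
    then obtain a b where "x = (a,b)" "a \<in> {1..4}" "b \<in> {1..4}" by auto
    then show "(case x of (a, b) \<Rightarrow> transpose a b) = (case x of (a, b) \<Rightarrow> pf (map (transpose a b) [1, 2, 3, 4]))"
      using transp_pf by simp
  qed
  also have "\<dots> = pf ` ((\<lambda>(a,b). map (transpose a b) [1,2,3,4]) ` ?Pr)"
    by (simp add: image_image case_prod_beta)
  also have "\<dots> = pf ` set C1L" by (simp only: C1set)
  finally have e: "{transpose a b | a b. a \<in> {1..4::nat} \<and> b \<in> {1..4} \<and> a \<noteq> b} = pf ` set C1L" .
  have "set C1L \<subseteq> set P4" using chk5 by (auto simp: okL_def list_all_iff)
  then show ?thesis unfolding C1_def e using gr_sum_basis_list chk5 by blast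
qed


lemma JM_eq: "k \<in> {1,2,3,4} \<Longrightarrow> JM k = toZ (jmL k)"
proof -
  assume k: "k \<in> {1,2,3,4}"
  have t: "transpose 1 2 = pf [2,1,3,4]" "transpose 1 3 = pf [3,2,1,4]" "transpose 2 3 = pf [1,3,2,4]"
     "transpose 1 4 = pf [4,2,3,1]" "transpose 2 4 = pf [1,4,3,2]" "transpose 3 4 = pf [1,2,4,3]"
    using transp_pf[of 1 2] transp_pf[of 1 3] transp_pf[of 2 3] transp_pf[of 1 4] transp_pf[of 2 4] transp_pf[of 3 4]
    by simp_all
  have s: "{1..<1::nat} = {}" "{1..<2::nat} = {1}" "{1..<3::nat} = {1,2}" "{1..<4::nat} = {1,2,3}" by auto
  have e: "JM 1 = gr_sum (\<lambda>j. gr_basis (transpose j 1)) {}"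
      "JM 2 = gr_sum (\<lambda>j. gr_basis (transpose j 2)) {1}"
      "JM 3 = gr_sum (\<lambda>j. gr_basis (transpose j 3)) {1,2}"
      "JM 4 = gr_sum (\<lambda>j. gr_basis (transpose j 4)) {1,2,3}"
    unfolding JM_def s by simp_all
  show ?thesis using k
    apply (elim insertE emptyE)
    apply (simp_all only: e)
    apply (simp_all add: t[simplified] t gr_sum_def jmL_def)
    apply (auto intro!: ext simp: gr_add_def gr_smult_def gr_basis_def gr_zero_def)
    done
qed

lemma one_eq: "gr_one = toZ oneL"
proof -
  have "id = pf [1,2,3,4]" using pf_perm[OF permutes_id[of "{1..4::nat}"]] by simp
  then show ?thesis by (auto intro!: ext simp: gr_one_def oneL_def gr_add_def gr_smult_def gr_basis_def gr_zero_def)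
qed

definition FF :: "nat \<Rightarrow> zs4" where "FF t = toZ (FLs!t)"
definition cont :: "nat \<Rightarrow> nat \<Rightarrow> int" where "cont t k = contL!t!(k-1)"

lemma FF_ok: "t < 10 \<Longrightarrow> okL (FLs!t)"
  using chk1 by (auto simp: list_all_iff)

lemma FF_supp: "t < 10 \<Longrightarrow> g \<notin> S4 \<Longrightarrow> FF t g = 0"
  using FF_ok toZ_supp by (simp add: FF_def)

lemma eig: "t < 10 \<Longrightarrow> k \<in> {1,2,3,4} \<Longrightarrow> gr_mult (JM k) (FF t) = gr_smult (cont t k) (FF t)"
proof -
  assume t: "t < 10" and k: "k \<in> {1,2,3,4}"
  have "eqL (mulL (jmL k) (FLs!t)) (smulL (contL!t!(k-1)) (FLs!t))"
    using chk1 t k by (auto simp: list_all_iff)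
  then have "toZ (mulL (jmL k) (FLs!t)) = toZ (smulL (contL!t!(k-1)) (FLs!t))" by (rule eqL_toZ)
  then show ?thesis using JM_eq[OF k] toZ_mulL[OF _ FF_ok[OF t]] chk5
    by (simp add: FF_def cont_def toZ_smulL)
qed

lemma smult_smult: "gr_smult a (gr_smult b x) = gr_smult (a*b) x"
  by (rule ext) (simp add: gr_smult_def)

lemma eig_pow: "t < 10 \<Longrightarrow> k \<in> {1,2,3,4} \<Longrightarrow> gr_mult (gr_pow (JM k) n) (FF t) = gr_smult (cont t k ^ n) (FF t)"
proof (induction n)
  case 0
  have "gr_mult gr_one (FF t) = FF t" using FF_supp[OF 0(1)] by (rule gr_mult_one)
  then show ?case by (simp add: gr_smult_def)
next
  case (Suc n)
  have "gr_mult (gr_pow (JM k) (Suc n)) (FF t) = gr_mult (JM k) (gr_mult (gr_pow (JM k) n) (FF t))"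
    by (simp add: gr_mult_assoc)
  also have "\<dots> = gr_smult (cont t k ^ Suc n) (FF t)"
    using Suc by (simp add: gr_mult_smult2 eig smult_smult mult.commute)
  finally show ?case .
qed

definition lc :: "(nat \<Rightarrow> int) \<Rightarrow> zs4" where
  "lc f = gr_sum (\<lambda>t. gr_smult (f t) (FF t)) {0..<10}"

lemma lc_pow: "k \<in> {1,2,3,4} \<Longrightarrow> gr_mult (gr_pow (JM k) n) (lc f) = lc (\<lambda>t. f t * cont t k ^ n)"
proof -
  assume k: "k \<in> {1,2,3,4}"
  have "gr_mult (gr_pow (JM k) n) (lc f) = gr_sum (\<lambda>t. gr_mult (gr_pow (JM k) n) (gr_smult (f t) (FF t))) {0..<10}"
    by (simp add: lc_def gr_mult_sum2)
  also have "\<dots> = lc (\<lambda>t. f t * cont t k ^ n)"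
  proof -
    have "\<And>t. t \<in> {0..<10} \<Longrightarrow> gr_mult (gr_pow (JM k) n) (gr_smult (f t) (FF t)) = gr_smult (f t * cont t k ^ n) (FF t)"
      by (simp add: gr_mult_smult2 eig_pow[OF _ k] smult_smult)
    then show ?thesis unfolding lc_def gr_sum_def by (intro ext sum.cong) auto
  qed
  finally show ?thesis .
qed

lemma toZ_concat_map: "toZ (concat (map f xs)) g = (\<Sum>x\<leftarrow>xs. toZ (f x) g)"
  by (induction xs) (auto simp: toZ_append gr_add_def gr_zero_def)

lemma D_one: "gr_smult 17280 gr_one = lc (\<lambda>t. wtL!t)"
proof -
  have "toZ (concat (map (\<lambda>t. smulL (wtL!t) (FLs!t)) [0..<10])) = toZ (smulL 17280 oneL)"
    using chk2 by (rule eqL_toZ)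
  then have "gr_smult 17280 gr_one = toZ (concat (map (\<lambda>t. smulL (wtL!t) (FLs!t)) [0..<10]))"
    by (simp add: toZ_smulL one_eq)
  also have "\<dots> = lc (\<lambda>t. wtL!t)"
  proof
    fix g
    show "toZ (concat (map (\<lambda>t. smulL (wtL!t) (FLs!t)) [0..<10])) g = lc (\<lambda>t. wtL!t) g"
      by (simp add: toZ_concat_map lc_def gr_sum_def toZ_smulL gr_smult_def FF_def sum_set_upt_conv_sum_list_nat[symmetric])
  qed
  finally show ?thesis .
qed

definition prodc :: "nat list \<Rightarrow> nat \<Rightarrow> int" where
  "prodc \<alpha> t = cont t 1 ^ (\<alpha>!0) * cont t 2 ^ (\<alpha>!1) * cont t 3 ^ (\<alpha>!2) * cont t 4 ^ (\<alpha>!3)"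

lemma prod_term: "gr_smult 17280 (gr_prod_list (map (\<lambda>i. gr_pow (JM (i+1)) (\<alpha> ! i)) [0..<4]))
   = lc (\<lambda>t. wtL!t * prodc \<alpha> t)"
proof -
  have u: "map (\<lambda>i. gr_pow (JM (i+1)) (\<alpha> ! i)) [0..<4] = [gr_pow (JM 1) (\<alpha>!0), gr_pow (JM 2) (\<alpha>!1), gr_pow (JM 3) (\<alpha>!2), gr_pow (JM 4) (\<alpha>!3)]"
    by (simp add: upt_rec numeral_eq_Suc)
  have "gr_smult 17280 (gr_prod_list (map (\<lambda>i. gr_pow (JM (i+1)) (\<alpha> ! i)) [0..<4]))
    = gr_mult (gr_pow (JM 1) (\<alpha>!0)) (gr_mult (gr_pow (JM 2) (\<alpha>!1)) (gr_mult (gr_pow (JM 3) (\<alpha>!2))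
        (gr_mult (gr_pow (JM 4) (\<alpha>!3)) (gr_smult 17280 gr_one))))"
    by (simp only: u gr_prod_list_def foldr.simps o_def id_apply gr_mult_smult2[symmetric])
  also have "\<dots> = lc (\<lambda>t. wtL!t * prodc \<alpha> t)"
    by (simp add: D_one lc_pow prodc_def mult_ac)
  finally show ?thesis .
qed


definition Aset :: "nat list \<Rightarrow> nat list set" where
  "Aset mu = {\<alpha>. length \<alpha> = 4 \<and> length mu \<le> 4 \<and> mset \<alpha> = mset (mu @ replicate (4 - length mu) 0)}"
definition pad3 :: "nat list \<Rightarrow> nat list" where
  "pad3 mu = mu @ replicate (3 - length mu) 0"
definition Bset :: "nat list \<Rightarrow> nat list set" where
  "Bset t = {\<beta>. length \<beta> = 3 \<and> mset \<beta> = mset t}"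
definition s3 :: "nat list \<Rightarrow> int \<Rightarrow> int \<Rightarrow> int \<Rightarrow> int" where
  "s3 t x y z = (\<Sum>\<beta>\<in>Bset t. x^(\<beta>!0) * y^(\<beta>!1) * z^(\<beta>!2))"

lemma finite_Aset: "finite (Aset mu)"
proof -
  have "Aset mu \<subseteq> {xs. set xs \<subseteq> set (mu @ replicate (4 - length mu) 0) \<and> length xs = 4}"
    unfolding Aset_def using mset_eq_setD by blast
  then show ?thesis by (rule finite_subset) (simp add: finite_lists_length_eq)
qed

lemma finite_Bset: "finite (Bset t)"
proof -
  have "Bset t \<subseteq> {xs. set xs \<subseteq> set t \<and> length xs = 3}"
    unfolding Bset_def using mset_eq_setD by blast
  then show ?thesis by (rule finite_subset) (simp add: finite_lists_length_eq)
qed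

lemma m_JM_Aset: "m_JM mu = gr_sum (\<lambda>\<alpha>. gr_prod_list (map (\<lambda>i. gr_pow (JM (i+1)) (\<alpha> ! i)) [0..<4])) (Aset mu)"
  unfolding m_JM_def Aset_def by simp

lemma Dm: "gr_smult 17280 (m_JM mu) = lc (\<lambda>t. wtL!t * (\<Sum>\<alpha>\<in>Aset mu. prodc \<alpha> t))"
proof
  fix g
  have "gr_smult 17280 (m_JM mu) g = (\<Sum>\<alpha>\<in>Aset mu. gr_smult 17280 (gr_prod_list (map (\<lambda>i. gr_pow (JM (i+1)) (\<alpha> ! i)) [0..<4])) g)"
    by (simp add: m_JM_Aset gr_sum_def gr_smult_def sum_distrib_left)
  also have "\<dots> = (\<Sum>\<alpha>\<in>Aset mu. lc (\<lambda>t. wtL!t * prodc \<alpha> t) g)"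
    by (simp only: prod_term)
  also have "\<dots> = (\<Sum>\<alpha>\<in>Aset mu. \<Sum>t\<in>{0..<10}. wtL!t * prodc \<alpha> t * FF t g)"
    by (simp add: lc_def gr_sum_def gr_smult_def)
  also have "\<dots> = (\<Sum>t\<in>{0..<10}. \<Sum>\<alpha>\<in>Aset mu. wtL!t * prodc \<alpha> t * FF t g)"
    by (rule sum.swap)
  also have "\<dots> = lc (\<lambda>t. wtL!t * (\<Sum>\<alpha>\<in>Aset mu. prodc \<alpha> t)) g"
    by (simp add: lc_def gr_sum_def gr_smult_def sum_distrib_left sum_distrib_right mult_ac)
  finally show "gr_smult 17280 (m_JM mu) g = lc (\<lambda>t. wtL!t * (\<Sum>\<alpha>\<in>Aset mu. prodc \<alpha> t)) g" .
qed

lemma cont1_list: "list_all (\<lambda>t. contL!t!0 = 0) [0..<10]" by code_simp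
lemma cont1: "t < 10 \<Longrightarrow> cont t 1 = 0"
  using cont1_list by (auto simp: list_all_iff cont_def)

lemma mset_Aset_Cons:
  assumes "length mu \<le> 3"
  shows "(0 # \<beta> \<in> Aset mu) = (\<beta> \<in> Bset (pad3 mu))"
proof -
  have e: "4 - length mu = Suc (3 - length mu)" using assms by simp
  show ?thesis unfolding Aset_def Bset_def pad3_def using assms
    by (simp add: e)
qed

lemma mv:
  assumes l: "length mu \<le> 3" and t: "t < 10"
  shows "(\<Sum>\<alpha>\<in>Aset mu. prodc \<alpha> t) = s3 (pad3 mu) (cont t 2) (cont t 3) (cont t 4)"
proof -
  have sub: "(Cons 0) ` Bset (pad3 mu) \<subseteq> Aset mu" using mset_Aset_Cons[OF l] by auto
  have z: "\<forall>\<alpha>\<in>Aset mu - (Cons 0) ` Bset (pad3 mu). prodc \<alpha> t = 0"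
  proof
    fix \<alpha> assume a: "\<alpha> \<in> Aset mu - (Cons 0) ` Bset (pad3 mu)"
    then have len: "length \<alpha> = 4" by (simp add: Aset_def)
    then obtain a0 r where ar: "\<alpha> = a0 # r" by (cases \<alpha>) auto
    have "a0 \<noteq> 0"
    proof
      assume "a0 = 0"
      then have "r \<in> Bset (pad3 mu)" using a ar mset_Aset_Cons[OF l] by auto
      then show False using a ar \<open>a0 = 0\<close> by auto
    qed
    then show "prodc \<alpha> t = 0" using ar cont1[OF t] by (simp add: prodc_def)
  qed
  have "(\<Sum>\<alpha>\<in>Aset mu. prodc \<alpha> t) = (\<Sum>\<alpha>\<in>(Cons 0) ` Bset (pad3 mu). prodc \<alpha> t)"
    by (rule sum.mono_neutral_right[OF finite_Aset sub z])
  also have "\<dots> = (\<Sum>\<beta>\<in>Bset (pad3 mu). prodc (0#\<beta>) t)"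
    by (subst sum.reindex) (auto simp: inj_on_def)
  also have "\<dots> = s3 (pad3 mu) (cont t 2) (cont t 3) (cont t 4)"
    by (simp add: s3_def prodc_def)
  finally show ?thesis .
qed

lemma len3: "length \<beta> = 3 \<Longrightarrow> \<beta> = [\<beta>!0, \<beta>!1, \<beta>!2]"
  by (cases \<beta>; simp; rename_tac b l; case_tac l; simp; rename_tac c l; case_tac l; simp)

lemma len3E: "length \<beta> = 3 \<Longrightarrow> \<exists>a b c. \<beta> = [a,b,c]"
  by (metis len3)

lemma s3_swap12: "s3 t x y z = s3 t y x z"
proof -
  let ?sw = "\<lambda>\<beta>::nat list. [\<beta>!1, \<beta>!0, \<beta>!2]"
  have inB: "\<And>\<beta>. \<beta> \<in> Bset t \<Longrightarrow> ?sw \<beta> \<in> Bset t"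
    by (auto simp: Bset_def add_mset_commute dest!: len3E)
  have inv: "\<And>\<beta>. \<beta> \<in> Bset t \<Longrightarrow> ?sw (?sw \<beta>) = \<beta>"
    by (auto simp: Bset_def dest!: len3E)
  show ?thesis unfolding s3_def
    apply (rule sum.reindex_bij_witness[where i="?sw" and j="?sw"])
    apply (simp_all only: inB inv)
    apply (simp add: mult.commute)
    done
qed

lemma s3_swap23: "s3 t x y z = s3 t x z y"
proof -
  let ?sw = "\<lambda>\<beta>::nat list. [\<beta>!0, \<beta>!2, \<beta>!1]"
  have inB: "\<And>\<beta>. \<beta> \<in> Bset t \<Longrightarrow> ?sw \<beta> \<in> Bset t"
    by (auto simp: Bset_def add_mset_commute dest!: len3E)
  have inv: "\<And>\<beta>. \<beta> \<in> Bset t \<Longrightarrow> ?sw (?sw \<beta>) = \<beta>"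
    by (auto simp: Bset_def dest!: len3E)
  show ?thesis unfolding s3_def
    apply (rule sum.reindex_bij_witness[where i="?sw" and j="?sw"])
    apply (simp_all only: inB inv)
    apply (simp add: mult.assoc mult.commute[of "y^_" "z^_"])
    done
qed

lemma s3_neg: "s3 t (-x) (-y) (-z) = (-1)^(sum_list t) * s3 t x y z"
proof -
  have "\<And>\<beta>. \<beta> \<in> Bset t \<Longrightarrow> (-x)^(\<beta>!0) * (-y)^(\<beta>!1) * (-z)^(\<beta>!2) = (-1)^(sum_list t) * (x^(\<beta>!0) * y^(\<beta>!1) * z^(\<beta>!2))"
  proof -
    fix \<beta> assume b: "\<beta> \<in> Bset t"
    then have l: "length \<beta> = 3" and m: "mset \<beta> = mset t" by (auto simp: Bset_def)
    have "sum_list t = sum_list \<beta>" using m by (metis sum_mset_sum_list)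
    also have "\<dots> = \<beta>!0 + \<beta>!1 + \<beta>!2" using len3E[OF l] by auto
    finally have s: "sum_list t = \<beta>!0 + \<beta>!1 + \<beta>!2" .
    show "(-x)^(\<beta>!0) * (-y)^(\<beta>!1) * (-z)^(\<beta>!2) = (-1)^(sum_list t) * (x^(\<beta>!0) * y^(\<beta>!1) * z^(\<beta>!2))"
      unfolding s power_minus[of x] power_minus[of y] power_minus[of z] power_add by (simp only: mult_ac)
  qed
  then show ?thesis unfolding s3_def sum_distrib_left by (rule sum.cong[OF refl])
qed


definition pp :: "nat list \<Rightarrow> int" where "pp mu = s3 (pad3 mu) 1 2 3"
definition qq :: "nat list \<Rightarrow> int" where "qq mu = s3 (pad3 mu) 1 2 (-1)"

lemma sum_pad3: "sum_list (pad3 mu) = sum_list mu"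
  by (simp add: pad3_def)

lemma sum10: "(\<Sum>t\<in>{0..<10::nat}. f t) = f 0 + f 1 + f 2 + f 3 + f 4 + f 5 + f 6 + f 7 + f 8 + (f 9 :: int)"
  by (simp add: eval_nat_numeral atLeast0LessThan)

lemma formula:
  assumes l: "length mu \<le> 3" and o: "odd (sum_list mu)"
  shows "12 * m_JM mu g = (pp mu + 3 * qq mu) * C1 g + (pp mu - 3 * qq mu) * C3 g"
proof -
  let ?T = "pad3 mu"
  have n1: "(-1::int)^(sum_list ?T) = -1" using o by (simp add: sum_pad3)
  have v: "s3 ?T 1 2 3 = pp mu" "s3 ?T 1 2 (-1) = qq mu"
    "s3 ?T 1 (-1) 2 = qq mu" "s3 ?T (-1) 1 2 = qq mu"
    "s3 ?T 1 (-1) 0 = 0" "s3 ?T (-1) 1 0 = 0"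
    "s3 ?T 1 (-1) (-2) = - qq mu" "s3 ?T (-1) 1 (-2) = - qq mu"
    "s3 ?T (-1) (-2) 1 = - qq mu" "s3 ?T (-1) (-2) (-3) = - pp mu"
  proof -
    show a: "s3 ?T 1 2 3 = pp mu" "s3 ?T 1 2 (-1) = qq mu" by (simp_all add: pp_def qq_def)
    show b: "s3 ?T 1 (-1) 2 = qq mu" using a s3_swap23 by metis
    show c: "s3 ?T (-1) 1 2 = qq mu" using b s3_swap12 by metis
    have "s3 ?T (-1) 1 0 = - s3 ?T 1 (-1) 0" using s3_neg[of ?T 1 "-1" 0] n1 by simp
    moreover have "s3 ?T (-1) 1 0 = s3 ?T 1 (-1) 0" using s3_swap12 by metis
    ultimately show "s3 ?T 1 (-1) 0 = 0" "s3 ?T (-1) 1 0 = 0" by simp_all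
    show "s3 ?T 1 (-1) (-2) = - qq mu" using s3_neg[of ?T "-1" 1 2] n1 c by simp
    show "s3 ?T (-1) 1 (-2) = - qq mu" using s3_neg[of ?T 1 "-1" 2] n1 b by simp
    show "s3 ?T (-1) (-2) 1 = - qq mu" using s3_neg[of ?T 1 2 "-1"] n1 a by simp
    show "s3 ?T (-1) (-2) (-3) = - pp mu" using s3_neg[of ?T 1 2 3] n1 a by simp
  qed
  have "17280 * m_JM mu g = lc (\<lambda>t. wtL!t * (\<Sum>\<alpha>\<in>Aset mu. prodc \<alpha> t)) g"
    using Dm[of mu] by (metis gr_smult_def)
  also have "\<dots> = (\<Sum>t\<in>{0..<10}. wtL!t * s3 ?T (cont t 2) (cont t 3) (cont t 4) * FF t g)"
    unfolding lc_def gr_sum_def gr_smult_def by (rule sum.cong) (simp_all add: mv[OF l])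
  also have "\<dots> = pp mu * (FF 0 g - FF 9 g) + qq mu * (15 * FF 1 g - 12 * FF 2 g - 12 * FF 3 g + 12 * FF 6 g + 12 * FF 7 g - 15 * FF 8 g)"
    unfolding sum10 by (simp add: cont_def contL_def wtL_def v algebra_simps)
  finally have e1: "17280 * m_JM mu g = pp mu * (FF 0 g - FF 9 g) + qq mu * (15 * FF 1 g - 12 * FF 2 g - 12 * FF 3 g + 12 * FF 6 g + 12 * FF 7 g - 15 * FF 8 g)" .
  have "toZ (smulL 12 G1L) g = toZ (smulL 17280 (map (\<lambda>l. (1,l)) C1L @ map (\<lambda>l. (1,l)) C3L)) g"
    using eqL_toZ[OF chk3] by simp
  then have e2: "12 * (FF 0 g - FF 9 g) = 17280 * (C1 g + C3 g)"
    by (simp add: toZ_smulL toZ_append G1L_def gr_smult_def gr_add_def C1_eq C3_eq FF_def FLs_def algebra_simps)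
  have "toZ (smulL 4 G2L) g = toZ (smulL 17280 (map (\<lambda>l. (1,l)) C1L @ smulL (-1) (map (\<lambda>l. (1,l)) C3L))) g"
    using eqL_toZ[OF chk4] by simp
  then have e3: "4 * (15 * FF 1 g - 12 * FF 2 g - 12 * FF 3 g + 12 * FF 6 g + 12 * FF 7 g - 15 * FF 8 g) = 17280 * (C1 g - C3 g)"
    by (simp add: toZ_smulL toZ_append G2L_def gr_smult_def gr_add_def C1_eq C3_eq FF_def FLs_def algebra_simps)
  have "17280 * (12 * m_JM mu g) = 17280 * ((pp mu + 3 * qq mu) * C1 g + (pp mu - 3 * qq mu) * C3 g)"
  proof -
    have "17280 * (12 * m_JM mu g) = pp mu * (12 * (FF 0 g - FF 9 g)) + 3 * qq mu * (4 * (15 * FF 1 g - 12 * FF 2 g - 12 * FF 3 g + 12 * FF 6 g + 12 * FF 7 g - 15 * FF 8 g))"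
      using e1 by (simp add: algebra_simps)
    also have "\<dots> = 17280 * ((pp mu + 3 * qq mu) * C1 g + (pp mu - 3 * qq mu) * C3 g)"
      unfolding e2 e3 by (simp add: algebra_simps)
    finally show ?thesis .
  qed
  then show ?thesis by simp
qed

definition Acf :: "nat list \<Rightarrow> int" where "Acf mu = m_JM mu (pf [2,1,3,4])"
definition Bcf :: "nat list \<Rightarrow> int" where "Bcf mu = m_JM mu (pf [2,3,4,1])"

lemma C_vals: "C1 (pf [2,1,3,4]) = 1" "C3 (pf [2,1,3,4]) = 0" "C1 (pf [2,3,4,1]) = 0" "C3 (pf [2,3,4,1]) = 1"
proof -
  have m: "[2,1,3,4] \<in> set P4" "[2,3,4,1] \<in> set P4" by (simp_all add: P4_def)
  have o: "okL (map (\<lambda>l. (1,l)) C1L)" "okL (map (\<lambda>l. (1,l)) C3L)" using chk5 by auto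
  show "C1 (pf [2,1,3,4]) = 1" "C3 (pf [2,1,3,4]) = 0" "C1 (pf [2,3,4,1]) = 0" "C3 (pf [2,3,4,1]) = 1"
    unfolding C1_eq C3_eq using toZ_at[OF o(1) m(1)] toZ_at[OF o(2) m(1)] toZ_at[OF o(1) m(2)] toZ_at[OF o(2) m(2)]
    by (simp_all add: coef_def C1L_def C3L_def)
qed

lemma AB:
  assumes l: "length mu \<le> 3" and o: "odd (sum_list mu)"
  shows "12 * Acf mu = pp mu + 3 * qq mu" "12 * Bcf mu = pp mu - 3 * qq mu"
    "m_JM mu = gr_add (gr_smult (Acf mu) C1) (gr_smult (Bcf mu) C3)"
proof -
  show a: "12 * Acf mu = pp mu + 3 * qq mu" using formula[OF l o, of "pf [2,1,3,4]"] C_vals by (simp add: Acf_def)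
  show b: "12 * Bcf mu = pp mu - 3 * qq mu" using formula[OF l o, of "pf [2,3,4,1]"] C_vals by (simp add: Bcf_def)
  show "m_JM mu = gr_add (gr_smult (Acf mu) C1) (gr_smult (Bcf mu) C3)"
  proof
    fix g
    have "12 * m_JM mu g = (12 * Acf mu) * C1 g + (12 * Bcf mu) * C3 g"
      unfolding a b by (rule formula[OF l o])
    then have "12 * m_JM mu g = 12 * (Acf mu * C1 g + Bcf mu * C3 g)"
      by (simp add: algebra_simps)
    then show "m_JM mu g = gr_add (gr_smult (Acf mu) C1) (gr_smult (Bcf mu) C3) g"
      by (simp add: gr_add_def gr_smult_def)
  qed
qed


lemma Zspan_eval:
  assumes "h = gr_add (gr_smult s (gr_add (gr_smult a1 C1) (gr_smult b1 C3))) (gr_smult t (gr_add (gr_smult a2 C1) (gr_smult b2 C3)))"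
  shows "h (pf [2,1,3,4]) = s*a1 + t*a2" "h (pf [2,3,4,1]) = s*b1 + t*b2"
  using assms C_vals by (simp_all add: gr_add_def gr_smult_def)

lemma span_iff:
  fixes a1 b1 a2 b2 :: int
  shows "Zspan2 (gr_add (gr_smult a1 C1) (gr_smult b1 C3)) (gr_add (gr_smult a2 C1) (gr_smult b2 C3)) = Zspan2 C1 C3
     \<longleftrightarrow> \<bar>a1*b2 - a2*b1\<bar> = 1"
  (is "Zspan2 ?X ?Y = _ \<longleftrightarrow> _")
proof
  assume eq: "Zspan2 ?X ?Y = Zspan2 C1 C3"
  have "C1 = gr_add (gr_smult 1 C1) (gr_smult 0 C3)" by (simp add: gr_add_def gr_smult_def)
  then have "C1 \<in> Zspan2 C1 C3" unfolding Zspan2_def by blast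
  then have "C1 \<in> Zspan2 ?X ?Y" using eq by simp
  then obtain s t where st: "C1 = gr_add (gr_smult s ?X) (gr_smult t ?Y)" unfolding Zspan2_def by blast
  have "C3 = gr_add (gr_smult 0 C1) (gr_smult 1 C3)" by (simp add: gr_add_def gr_smult_def)
  then have "C3 \<in> Zspan2 C1 C3" unfolding Zspan2_def by blast
  then have "C3 \<in> Zspan2 ?X ?Y" using eq by simp
  then obtain s' t' where st': "C3 = gr_add (gr_smult s' ?X) (gr_smult t' ?Y)" unfolding Zspan2_def by blast
  have e1: "s*a1 + t*a2 = 1" "s*b1 + t*b2 = 0" using Zspan_eval[OF st] C_vals by simp_all
  have e2: "s'*a1 + t'*a2 = 0" "s'*b1 + t'*b2 = 1" using Zspan_eval[OF st'] C_vals by simp_all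
  have "(a1*b2 - a2*b1)*(s*t' - s'*t) = (s*a1+t*a2)*(s'*b1+t'*b2) - (s'*a1+t'*a2)*(s*b1+t*b2)"
    by (simp add: algebra_simps)
  also have "\<dots> = 1" using e1 e2 by simp
  finally show "\<bar>a1*b2 - a2*b1\<bar> = 1" by (auto simp: zmult_eq_1_iff)
next
  assume d: "\<bar>a1*b2 - a2*b1\<bar> = 1"
  define d where "d = a1*b2 - a2*b1"
  have "d = 1 \<or> d = -1" using d unfolding d_def by linarith
  then have dd: "d * d = 1" by auto
  show "Zspan2 ?X ?Y = Zspan2 C1 C3"
  proof (intro equalityI subsetI)
    fix h assume "h \<in> Zspan2 ?X ?Y"
    then obtain s t where "h = gr_add (gr_smult s ?X) (gr_smult t ?Y)" unfolding Zspan2_def by auto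
    then have "h = gr_add (gr_smult (s*a1 + t*a2) C1) (gr_smult (s*b1 + t*b2) C3)"
      by (auto simp: gr_add_def gr_smult_def algebra_simps)
    then show "h \<in> Zspan2 C1 C3" unfolding Zspan2_def by blast
  next
    fix h assume "h \<in> Zspan2 C1 C3"
    then obtain a b where h: "h = gr_add (gr_smult a C1) (gr_smult b C3)" unfolding Zspan2_def by auto
    define s where "s = d*(a*b2 - b*a2)"
    define t where "t = d*(b*a1 - a*b1)"
    have "s*a1 + t*a2 = (d*d)*a" by (simp add: s_def t_def d_def algebra_simps)
    then have sa: "s*a1 + t*a2 = a" using dd by simp
    have "s*b1 + t*b2 = (d*d)*b" by (simp add: s_def t_def d_def algebra_simps)
    then have sb: "s*b1 + t*b2 = b" using dd by simp
    have "h = gr_add (gr_smult s ?X) (gr_smult t ?Y)"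
    proof
      fix g
      have "gr_add (gr_smult s ?X) (gr_smult t ?Y) g = (s*a1 + t*a2) * C1 g + (s*b1 + t*b2) * C3 g"
        by (simp add: gr_add_def gr_smult_def algebra_simps)
      then show "h g = gr_add (gr_smult s ?X) (gr_smult t ?Y) g" using h sa sb by (simp add: gr_add_def gr_smult_def)
    qed
    then show "h \<in> Zspan2 ?X ?Y" unfolding Zspan2_def by blast
  qed
qed


lemma mset3: "mset [a,b,c] = mset [x,y,z::nat] \<Longrightarrow> [a,b,c] \<in> {[x,y,z],[x,z,y],[y,x,z],[y,z,x],[z,x,y],[z,y,x]}"
  by (auto simp: add_eq_conv_ex)

lemma Bset_eq: "Bset [x,y,z] = {[x,y,z],[x,z,y],[y,x,z],[y,z,x],[z,x,y],[z,y,x]}"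
proof (intro equalityI subsetI)
  fix \<beta> assume b: "\<beta> \<in> Bset [x,y,z]"
  then obtain a b c where "\<beta> = [a,b,c]" by (auto simp: Bset_def dest!: len3E)
  then show "\<beta> \<in> {[x,y,z],[x,z,y],[y,x,z],[y,z,x],[z,x,y],[z,y,x]}" using b mset3 by (simp add: Bset_def)
next
  fix \<beta> assume "\<beta> \<in> {[x,y,z],[x,z,y],[y,x,z],[y,z,x],[z,x,y],[z,y,x]}"
  then show "\<beta> \<in> Bset [x,y,z]" by (auto simp: Bset_def add_mset_commute)
qed

lemma s3_1: "n > 0 \<Longrightarrow> s3 [n,0,0] x y z = x^n + y^n + z^n"
  by (simp add: s3_def Bset_eq sum.insert_if)

lemma s3_2: "u > w \<Longrightarrow> w > 0 \<Longrightarrow> s3 [u,w,0] x y z =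
   x^u*y^w + x^w*y^u + x^u*z^w + x^w*z^u + y^u*z^w + y^w*z^u"
  by (simp add: s3_def Bset_eq sum.insert_if algebra_simps)

lemma s3_kk: "k > 0 \<Longrightarrow> s3 [k,k,0] x y z = (x*y)^k + (x*z)^k + (y*z)^k"
  by (simp add: s3_def Bset_eq sum.insert_if algebra_simps power_mult_distrib)

lemma s3_000: "s3 [0,0,0] x y z = 1"
  by (simp add: s3_def Bset_eq)

lemma s3_shift:
  assumes "a > 0" "b > 0" "c > 0"
  shows "s3 [a,b,c] x y z = x*y*z * s3 [a-1,b-1,c-1] x y z"
proof -
  have e: "[a,b,c] = map Suc [a-1,b-1,c-1]" using assms by simp
  have bs: "Bset (map Suc [a-1,b-1,c-1]) = map Suc ` Bset [a-1,b-1,c-1]"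
    unfolding list.map Bset_eq by auto
  then have "s3 [a,b,c] x y z = (\<Sum>\<beta>\<in>Bset [a-1,b-1,c-1]. x^((map Suc \<beta>)!0) * y^((map Suc \<beta>)!1) * z^((map Suc \<beta>)!2))"
    unfolding s3_def e bs by (subst sum.reindex) (auto simp: inj_on_def)
  also have "\<dots> = (\<Sum>\<beta>\<in>Bset [a-1,b-1,c-1]. x*y*z * (x^(\<beta>!0) * y^(\<beta>!1) * z^(\<beta>!2)))"
    by (rule sum.cong[OF refl]) (auto simp: Bset_def mult_ac dest!: len3E)
  finally show ?thesis by (simp add: s3_def sum_distrib_left)
qed


definition red :: "nat \<Rightarrow> nat" where "red x = (if x < 2 then x else 2 + (x - 2) mod 12)"

lemma red_props: "x \<ge> 1 \<Longrightarrow> red x \<ge> 1 \<and> red x \<le> 13 \<and> (odd (red x) \<longleftrightarrow> odd x) \<and> (x \<ge> 3 \<longrightarrow> red x \<ge> 2)"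
  unfolding red_def by presburger

lemma step12:
  assumes g: "g \<in> {2,3,6::int}" and z: "z \<ge> 2"
  shows "g^(z+12) mod 16380 = g^z mod 16380"
proof -
  have d: "(16380::int) dvd g^2 * (g^12 - 1)" using g by auto
  have "g^(z+12) - g^z = g^(z-2) * (g^2 * (g^12 - 1))"
  proof -
    have "z = (z - 2) + 2" using z by simp
    then have "g^z = g^(z-2) * g^2" by (metis power_add)
    moreover have "g^(z+12) = g^z * g^12" by (simp add: power_add)
    ultimately show ?thesis by (simp add: algebra_simps)
  qed
  then have "(16380::int) dvd g^(z+12) - g^z" using d by simp
  then show ?thesis by (simp add: mod_eq_dvd_iff)
qed

lemma pow_red: "g \<in> {2,3,6::int} \<Longrightarrow> g^x mod 16380 = g^(red x) mod 16380"
proof (cases "x < 2")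
  case True then show ?thesis by (simp add: red_def)
next
  case False
  assume g: "g \<in> {2,3,6::int}"
  have "\<And>q. g^(2 + (x-2) mod 12 + 12*q) mod 16380 = g^(2 + (x-2) mod 12) mod 16380"
  proof -
    fix q show "g^(2 + (x-2) mod 12 + 12*q) mod 16380 = g^(2 + (x-2) mod 12) mod 16380"
    proof (induction q)
      case 0 then show ?case by simp
    next
      case (Suc q)
      have "g^(2 + (x-2) mod 12 + 12*Suc q) mod 16380 = g^((2 + (x-2) mod 12 + 12*q) + 12) mod 16380"
        by (simp add: algebra_simps)
      also have "\<dots> = g^(2 + (x-2) mod 12 + 12*q) mod 16380" by (rule step12[OF g]) simp
      finally show ?case using Suc by simp
    qed
  qed
  moreover have "x = 2 + (x-2) mod 12 + 12*((x-2) div 12)" using False by simp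
  ultimately show ?thesis using False by (metis red_def)
qed

definition SPL :: "int list" where "SPL = [11, 251, 3791, 7811, 8051, 11831]"

lemma oddl: "x \<ge> 1 \<Longrightarrow> x \<le> 13 \<Longrightarrow> odd x \<Longrightarrow> x \<in> set [1,3,5,7,9,11,13::nat]"
proof -
  assume "x \<ge> 1" "x \<le> 13" "odd x"
  then have "x = 1 \<or> x = 3 \<or> x = 5 \<or> x = 7 \<or> x = 9 \<or> x = 11 \<or> x = 13" by presburger
  then show ?thesis by auto
qed

lemma evenl: "x \<ge> 1 \<Longrightarrow> x \<le> 13 \<Longrightarrow> even x \<Longrightarrow> x \<in> set [2,4,6,8,10,12::nat]"
proof -
  assume "x \<ge> 1" "x \<le> 13" "even x"
  then have "x = 2 \<or> x = 4 \<or> x = 6 \<or> x = 8 \<or> x = 10 \<or> x = 12" by presburger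
  then show ?thesis by auto
qed

lemma SP_chk: "list_all (\<lambda>k. (2^k+3^k+6^k::int) mod 16380 \<in> set SPL) [1,3,5,7,9,11,13]"
  by (simp add: SPL_def)

lemma fam1_chk: "list_all (\<lambda>n. list_all (\<lambda>p. (3*2^n*p - (1+2^n+3^n)::int) mod 16380 \<notin> {12, 16368}) SPL) [3,5,7,9,11,13]"
  by (simp add: SPL_def)

lemma fam2_chk: "list_all (\<lambda>u. list_all (\<lambda>w. list_all (\<lambda>p. (6 * 2^u * p - (2^w+2^u+3^w+3^u+2^u*3^w+2^w*3^u)::int) mod 16380 \<notin> {12, 16368}) SPL) [2,4,6,8,10,12]) [1,3,5,7,9,11,13]"
  by (simp add: SPL_def)

lemma mod_not: "(E::int) mod 16380 \<notin> {12, 16368} \<Longrightarrow> E \<noteq> 12 \<and> E \<noteq> -12"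
proof (intro conjI notI)
  assume "E mod 16380 \<notin> {12, 16368}" "E = 12" then show False by simp
next
  assume "E mod 16380 \<notin> {12, 16368}" "E = -12" then show False by simp
qed

lemma Pk_red: "odd k \<Longrightarrow> (2^k+3^k+6^k::int) mod 16380 \<in> set SPL"
proof -
  assume k: "odd k"
  then have k1: "k \<ge> 1" by presburger
  have "(2^k+3^k+6^k::int) mod 16380 = (2^(red k)+3^(red k)+6^(red k)::int) mod 16380"
    by (intro mod_add_cong pow_red) auto
  moreover have "red k \<in> set [1,3,5,7,9,11,13]" using red_props[OF k1] k oddl by blast
  ultimately show ?thesis using SP_chk by (auto simp: list_all_iff)
qed

lemma fam1:
  assumes n: "odd n" "n \<ge> 3" and k: "odd k"
  shows "3*2^n*(2^k+3^k+6^k) - (1+2^n+3^n::int) \<noteq> 12 \<and> 3*2^n*(2^k+3^k+6^k) - (1+2^n+3^n::int) \<noteq> -12"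
proof -
  define p where "p = (2^k+3^k+6^k::int) mod 16380"
  have p: "p \<in> set SPL" using Pk_red[OF k] by (simp add: p_def)
  have "(3*2^n*(2^k+3^k+6^k) - (1+2^n+3^n::int)) mod 16380 = (3*2^(red n)*p - (1+2^(red n)+3^(red n))) mod 16380"
    unfolding p_def by (intro mod_add_cong mod_diff_cong mod_mult_cong pow_red refl mod_mod_trivial[symmetric]) auto
  moreover have "red n \<in> set [3,5,7,9,11,13]" using red_props[of n] n oddl[of "red n"] by auto
  moreover have "\<forall>n\<in>set [3,5,7,9,11,13::nat]. \<forall>p\<in>set SPL. (3*2^n*p - (1+2^n+3^n)::int) mod 16380 \<notin> {12, 16368}"
    using fam1_chk by (simp only: list_all_iff)
  ultimately have "(3*2^n*(2^k+3^k+6^k) - (1+2^n+3^n::int)) mod 16380 \<notin> {12, 16368}"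
    using p by (simp only:) blast
  then show ?thesis by (rule mod_not)
qed

lemma fam2:
  assumes u: "odd u" and w: "even w" "w \<ge> 1" and k: "odd k"
  shows "6*2^u*(2^k+3^k+6^k) - (2^w+2^u+3^w+3^u+2^u*3^w+2^w*3^u::int) \<noteq> 12 \<and>
         6*2^u*(2^k+3^k+6^k) - (2^w+2^u+3^w+3^u+2^u*3^w+2^w*3^u::int) \<noteq> -12"
proof -
  have u1: "u \<ge> 1" using u by presburger
  define p where "p = (2^k+3^k+6^k::int) mod 16380"
  have p: "p \<in> set SPL" using Pk_red[OF k] by (simp add: p_def)
  have "(6*2^u*(2^k+3^k+6^k) - (2^w+2^u+3^w+3^u+2^u*3^w+2^w*3^u::int)) mod 16380
     = (6*2^(red u)*p - (2^(red w)+2^(red u)+3^(red w)+3^(red u)+2^(red u)*3^(red w)+2^(red w)*3^(red u))) mod 16380"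
    unfolding p_def by (intro mod_add_cong mod_diff_cong mod_mult_cong pow_red refl mod_mod_trivial[symmetric]) auto
  moreover have "red u \<in> set [1,3,5,7,9,11,13]" using red_props[OF u1] u oddl by blast
  moreover have "red w \<in> set [2,4,6,8,10,12]" using red_props[OF w(2)] w evenl by blast
  moreover have "\<forall>u\<in>set [1,3,5,7,9,11,13::nat]. \<forall>w\<in>set [2,4,6,8,10,12::nat]. \<forall>p\<in>set SPL. (6 * 2^u * p - (2^w+2^u+3^w+3^u+2^u*3^w+2^w*3^u)::int) mod 16380 \<notin> {12, 16368}"
    using fam2_chk by (simp only: list_all_iff)
  ultimately have "(6*2^u*(2^k+3^k+6^k) - (2^w+2^u+3^w+3^u+2^u*3^w+2^w*3^u::int)) mod 16380 \<notin> {12, 16368}"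
    using p by (simp only:) blast
  then show ?thesis by (rule mod_not)
qed


lemma d4: "(4::int) dvd 3^m - (-1)^m"
proof (induction m)
  case 0 then show ?case by simp
next
  case (Suc m)
  have eq: "(3::int)^Suc m - (-1)^Suc m = 3 * (3^m - (-1)^m) + 4 * (-1)^m" by (simp add: algebra_simps)
  have h1: "(4::int) dvd 3 * (3^m - (-1)^m)" using Suc.IH by (rule dvd_mult)
  have h2: "(4::int) dvd 4 * (-1)^m" by simp
  have h: "(4::int) dvd 3 * (3^m - (-1)^m) + 4 * (-1)^m" using h1 h2 by (rule dvd_add)
  show ?case using h eq by metis
qed

lemma T1: "(4::int) dvd s3 r 1 2 3 - s3 r 1 2 (-1)"
proof -
  have "s3 r 1 2 3 - s3 r 1 2 (-1) = (\<Sum>\<beta>\<in>Bset r. 2^(\<beta>!1) * (3^(\<beta>!2) - (-1)^(\<beta>!2)))"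
    by (simp add: s3_def sum_subtractf[symmetric] algebra_simps)
  also have "(4::int) dvd \<dots>" by (intro dvd_sum dvd_mult d4)
  finally show ?thesis .
qed

lemma pm_ge2: "(3::int)^m + (-1)^m \<ge> 2"
proof (cases m)
  case 0 then show ?thesis by simp
next
  case (Suc j)
  have "(3::int)^1 \<le> 3^m" by (rule power_increasing) (use Suc in auto)
  then have "(3::int)^m \<ge> 3" by simp
  moreover have "(-1::int)^m \<ge> -1" by (cases "even m") auto
  ultimately show ?thesis by linarith
qed

lemma pm_ge0: "(0::int) \<le> 3^m + (-1)^m"
  using pm_ge2[of m] by linarith

lemma T2:
  assumes "r0 \<ge> 1"
  shows "s3 [r0,r1,r2] 1 2 3 + s3 [r0,r1,r2] 1 2 (-1) \<ge> 4"
proof -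
  have e: "s3 [r0,r1,r2] 1 2 3 + s3 [r0,r1,r2] 1 2 (-1) = (\<Sum>\<beta>\<in>Bset [r0,r1,r2]. 2^(\<beta>!1) * (3^(\<beta>!2) + (-1)^(\<beta>!2)))"
    by (simp add: s3_def sum.distrib[symmetric] algebra_simps)
  have mem: "[r1,r0,r2] \<in> Bset [r0,r1,r2]" by (simp add: Bset_eq)
  have nn: "\<And>\<beta>. \<beta> \<in> Bset [r0,r1,r2] \<Longrightarrow> (0::int) \<le> 2^(\<beta>!1) * (3^(\<beta>!2) + (-1)^(\<beta>!2))"
  proof -
    fix \<beta> show "(0::int) \<le> 2^(\<beta>!1) * (3^(\<beta>!2) + (-1)^(\<beta>!2))"
      using pm_ge2[of "\<beta>!2"] by (intro mult_nonneg_nonneg) auto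
  qed
  have "(4::int) \<le> 2^r0 * (3^r2 + (-1)^r2)"
  proof -
    have "(2::int)^1 \<le> 2^r0" by (rule power_increasing) (use assms in auto)
    then have a: "(2::int) \<le> 2^r0" by simp
    have "(2::int) * 2 \<le> 2^r0 * (3^r2 + (-1)^r2)"
      by (rule mult_mono[OF a pm_ge2]) auto
    then show ?thesis by simp
  qed
  also have "\<dots> = (\<lambda>\<beta>. 2^(\<beta>!1) * (3^(\<beta>!2) + (-1)^(\<beta>!2))) [r1,r0,r2]" by simp
  also have "\<dots> \<le> (\<Sum>\<beta>\<in>Bset [r0,r1,r2]. 2^(\<beta>!1) * (3^(\<beta>!2) + (-1)^(\<beta>!2)))"
    by (rule member_le_sum[OF mem]) (auto intro!: mult_nonneg_nonneg simp: finite_Bset pm_ge0)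
  finally show ?thesis using e by simp
qed

lemma neg1_sum_even: "even (u+w) \<Longrightarrow> even ((-1::int)^w + (-1)^u)"
  by (cases "even w") auto

lemma T3:
  assumes o: "r0 \<ge> r1" "r1 \<ge> r2" "even (r0+r1+r2)" and q: "odd (s3 [r0,r1,r2] 1 2 (-1))"
  shows "(r0 = 0 \<and> r1 = 0 \<and> r2 = 0) \<or> (r2 = 0 \<and> r0 = r1 \<and> r0 > 0)"
proof (rule ccontr)
  assume nc: "\<not> ?thesis"
  show False
  proof (cases "r2 > 0")
    case True
    then have "s3 [r0,r1,r2] 1 2 (-1) = 1*2*(-1) * s3 [r0-1,r1-1,r2-1] 1 2 (-1)"
      using o by (intro s3_shift) auto
    then show False using q by simp
  next
    case False
    then have r2: "r2 = 0" by simp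
    show False
    proof (cases "r1 = 0")
      case True
      then have r0: "r0 > 0" using nc r2 by auto
      have "even r0" using o r2 True by simp
      then have "s3 [r0,r1,r2] 1 2 (-1) = 2 + 2^r0" using s3_1[OF r0, of 1 2 "-1"] r2 True by simp
      then show False using q r0 by simp
    next
      case False
      then have w: "r1 > 0" by simp
      have u: "r0 > r1" using nc r2 o w by auto
      have "s3 [r0,r1,r2] 1 2 (-1) = 2^r1 + 2^r0 + ((-1)^r1 + (-1)^r0) + 2^r0*(-1)^r1 + 2^r1*(-1)^r0"
        using s3_2[OF u w, of 1 2 "-1"] r2 by simp
      moreover have "even ((-1::int)^r1 + (-1)^r0)" using o r2 by (intro neg1_sum_even) simp
      ultimately show False using q u w by simp
    qed
  qed
qed

lemma shapes:
  assumes p: "is_partition mu" and l: "length mu \<le> 3" and o: "odd (sum_list mu)"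
  shows "(\<exists>n. mu = [n] \<and> odd n) \<or> (\<exists>u w. mu = [u,w] \<and> u > w \<and> w > 0 \<and> odd (u+w))
    \<or> (\<exists>a b c. mu = [a,b,c] \<and> a \<ge> b \<and> b \<ge> c \<and> c > 0 \<and> odd (a+b+c))"
proof -
  have s: "sorted (rev mu)" and pos: "\<forall>x\<in>set mu. 0 < x" using p by (auto simp: is_partition_def)
  consider "mu = []" | n where "mu = [n]" | u w where "mu = [u,w]" | a b c where "mu = [a,b,c]"
    using l by (cases mu; simp; rename_tac l; case_tac l; simp; rename_tac l; case_tac l; simp; rename_tac l; case_tac l; simp)
  then show ?thesis
  proof cases
    case 1 then show ?thesis using o by simp
  next
    case 2 then show ?thesis using o by simp
  next
    case 3
    then have "w \<le> u" "w > 0" "odd (u+w)" using s pos o by auto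
    then have "u > w" by (cases "u = w") auto
    then show ?thesis using 3 \<open>w > 0\<close> \<open>odd (u+w)\<close> by blast
  next
    case 4
    then have "c \<le> b" "b \<le> a" "c > 0" "odd (a+b+c)" using s pos o by auto
    then show ?thesis using 4 by blast
  qed
qed

lemma pow_ge_int: "m \<ge> 1 \<Longrightarrow> (b::int) \<ge> 1 \<Longrightarrow> b^m \<ge> b"
  by (metis power_increasing power_one_right)

lemma three_pow: "n \<ge> 5 \<Longrightarrow> (3::int)^n \<ge> 2^(n+1) + 12"
proof (induction n rule: nat_induct_at_least)
  case base then show ?case by simp
next
  case (Suc n)
  have a: "(0::int) \<le> 2^n" by simp
  have b: "(3::int)^(Suc n) = 3*3^n" "(2::int)^(Suc n + 1) = 4 * 2^n" "(2::int)^(n+1) = 2*2^n" by simp_all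
  show ?case using Suc.IH a b by linarith
qed

lemma three_two: "(2::int)^n \<le> 3^n"
  by (rule power_mono) auto

lemma pad3_1: "pad3 [n] = [n,0,0]" by (simp add: pad3_def numeral_2_eq_2)
lemma pad3_2: "pad3 [u,w] = [u,w,0]" by (simp add: pad3_def)
lemma pad3_3: "pad3 [a,b,c] = [a,b,c]" by (simp add: pad3_def)

definition Pk :: "nat \<Rightarrow> int" where "Pk k = 2^k+3^k+6^k"

lemma K1:
  assumes p: "is_partition mu" and l: "length mu \<le> 2" and o: "odd (sum_list mu)"
  shows "(\<exists>e. qq mu = 2^(e+1) \<and> (e = 0 \<longleftrightarrow> mu = [1])) \<and> pp mu > 0 \<and> (mu = [1] \<longrightarrow> pp mu = 6 \<and> qq mu = 2)
    \<and> (mu = [3] \<longrightarrow> pp mu = 36 \<and> qq mu = 8) \<and> (mu \<noteq> [1] \<longrightarrow> mu \<noteq> [3] \<longrightarrow> pp mu - 3 * qq mu > 12)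
    \<and> (mu \<noteq> [1] \<longrightarrow> odd k \<longrightarrow> 3 * qq mu * Pk k - pp mu \<noteq> 12 \<and> 3 * qq mu * Pk k - pp mu \<noteq> -12)"
proof -
  have sh: "(\<exists>n. mu = [n] \<and> odd n) \<or> (\<exists>u w. mu = [u,w] \<and> u > w \<and> w > 0 \<and> odd (u+w))"
    using shapes[OF p _ o] l by auto
  have all: "(\<exists>e. qq mu = 2^(e+1) \<and> (e = 0 \<longleftrightarrow> mu = [1])) \<and> pp mu > 0 \<and> (mu = [1] \<longrightarrow> pp mu = 6 \<and> qq mu = 2)
    \<and> (mu = [3] \<longrightarrow> pp mu = 36 \<and> qq mu = 8) \<and> (mu \<noteq> [1] \<longrightarrow> mu \<noteq> [3] \<longrightarrow> pp mu - 3 * qq mu > 12)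
    \<and> (mu \<noteq> [1] \<longrightarrow> odd k \<longrightarrow> 3 * qq mu * Pk k - pp mu \<noteq> 12 \<and> 3 * qq mu * Pk k - pp mu \<noteq> -12)"
  proof (cases "\<exists>n. mu = [n] \<and> odd n")
    case True
    then obtain n where mu: "mu = [n]" and n: "odd n" by blast
    have n0: "n > 0" using n by presburger
    have pv: "pp mu = 1 + 2^n + 3^n" using s3_1[OF n0, of 1 2 3] by (simp add: pp_def mu pad3_1)
    have qv: "qq mu = 2^n" using s3_1[OF n0, of 1 2 "-1"] n by (simp add: qq_def mu pad3_1)
    have e: "qq mu = 2^((n-1)+1) \<and> ((n - 1) = 0 \<longleftrightarrow> mu = [1])" using qv n0 mu by auto
    have r3: "mu \<noteq> [1] \<longrightarrow> mu \<noteq> [3] \<longrightarrow> pp mu - 3 * qq mu > 12"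
    proof (intro impI)
      assume "mu \<noteq> [1]" "mu \<noteq> [3]"
      then have "n \<noteq> 1" "n \<noteq> 3" using mu by auto
      then have "n \<ge> 5" using n by presburger
      then show "pp mu - 3 * qq mu > 12" using three_pow[of n] pv qv by simp
    qed
    have r4: "mu \<noteq> [1] \<longrightarrow> odd k \<longrightarrow> 3 * qq mu * Pk k - pp mu \<noteq> 12 \<and> 3 * qq mu * Pk k - pp mu \<noteq> -12"
    proof (intro impI)
      assume "mu \<noteq> [1]" "odd k"
      then have "n \<noteq> 1" using mu by auto
      then have "n \<ge> 3" using n by presburger
      then show "3 * qq mu * Pk k - pp mu \<noteq> 12 \<and> 3 * qq mu * Pk k - pp mu \<noteq> -12"
        using fam1[OF n _ \<open>odd k\<close>] pv qv by (simp add: Pk_def)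
    qed
    have p0: "pp mu > 0" using pv by (simp add: add_pos_pos)
    have v1: "mu = [1] \<longrightarrow> pp mu = 6 \<and> qq mu = 2" using pv qv mu by auto
    have v3: "mu = [3] \<longrightarrow> pp mu = 36 \<and> qq mu = 8" using pv qv mu by auto
    have e': "\<exists>e. qq mu = 2^(e+1) \<and> (e = 0 \<longleftrightarrow> mu = [1])" using e by (intro exI[of _ "n-1"])
    show ?thesis by (intro conjI; (rule e' | rule p0 | rule v1 | rule v3 | rule r3 | rule r4))
  next
    case False
    then obtain u w where mu: "mu = [u,w]" and uw: "u > w" "w > 0" "odd (u+w)" using sh by blast
    have pv: "pp mu = 2^w+2^u+3^w+3^u+2^u*3^w+2^w*3^u" using s3_2[OF uw(1,2), of 1 2 3] by (simp add: pp_def mu pad3_2)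
    have qv0: "qq mu = 2^w + 2^u + (-1)^w + (-1)^u + 2^u*(-1)^w + 2^w*(-1)^u"
      using s3_2[OF uw(1,2), of 1 2 "-1"] by (simp add: qq_def mu pad3_2)
    have w3: "(3::int)^w \<ge> 3" "(2::int)^w \<ge> 2" using pow_ge_int[of w] uw by auto
    have u3: "(3::int)^u \<ge> 9"
    proof -
      have "(3::int)^2 \<le> 3^u" by (rule power_increasing) (use uw in auto)
      then show ?thesis by simp
    qed
    have h1: "(2::int)^u * 3^w \<ge> 2^u * 3" using w3 by simp
    have h2: "(2::int)^w * 3^u \<ge> 2 * 3^u" using w3 by simp
    have h3: "(2::int)^u \<le> 3^u" by (rule three_two)
    have pos: "(0::int) < 2^w" "(0::int) < 2^u" "(0::int) < 3^w" "(0::int) < 3^u" by simp_all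
    show ?thesis
    proof (cases "odd u")
      case True
      then have ew: "even w" using uw by presburger
      have qv: "qq mu = 2^(u+1)" using qv0 True ew by simp
      have q2: "qq mu = 2 * 2^u" using qv by simp
      have r3: "pp mu - 3 * qq mu > 12" unfolding pv q2 using h1 h2 h3 u3 pos w3 by linarith
      have eqn: "3 * qq mu * Pk k - pp mu = 6*2^u*(2^k+3^k+6^k) - (2^w+2^u+3^w+3^u+2^u*3^w+2^w*3^u)"
        unfolding pv q2 Pk_def by simp
      have r4: "odd k \<longrightarrow> 3 * qq mu * Pk k - pp mu \<noteq> 12 \<and> 3 * qq mu * Pk k - pp mu \<noteq> -12"
        using fam2[OF True ew, of k] uw unfolding eqn by simp
      have e: "qq mu = 2^(u+1) \<and> (u = 0 \<longleftrightarrow> mu = [1])" using qv mu uw by simp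
      have p0: "pp mu > 0" unfolding pv using pos by (intro add_pos_pos mult_pos_pos) simp_all
      have e': "\<exists>e. qq mu = 2^(e+1) \<and> (e = 0 \<longleftrightarrow> mu = [1])" using e by (intro exI[of _ u])
      have v1: "mu = [1] \<longrightarrow> pp mu = 6 \<and> qq mu = 2" "mu = [3] \<longrightarrow> pp mu = 36 \<and> qq mu = 8" using mu by simp_all
      have r3': "mu \<noteq> [1] \<longrightarrow> mu \<noteq> [3] \<longrightarrow> pp mu - 3 * qq mu > 12" using r3 by simp
      have r4': "mu \<noteq> [1] \<longrightarrow> odd k \<longrightarrow> 3 * qq mu * Pk k - pp mu \<noteq> 12 \<and> 3 * qq mu * Pk k - pp mu \<noteq> -12" using r4 by simp
      show ?thesis by (intro conjI; (rule e' | rule p0 | rule v1 | rule r3' | rule r4'))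
    next
      case False
      then have ow: "odd w" using uw by presburger
      have qv: "qq mu = 2^(w+1)" using qv0 False ow by simp
      have "(2::int)^(w+1) \<le> 2^u" by (rule power_increasing) (use uw in auto)
      then have q2: "qq mu \<le> 2^u" "qq mu = 2 * 2^w" using qv by simp_all
      have r3: "pp mu - 3 * qq mu > 12" using pv q2(1) h1 h2 h3 u3 pos w3 by linarith
      have eqn: "3 * qq mu * Pk k - pp mu = 6*2^w*(2^k+3^k+6^k) - (2^u+2^w+3^u+3^w+2^w*3^u+2^u*3^w)"
        unfolding pv q2(2) Pk_def by simp
      have r4: "odd k \<longrightarrow> 3 * qq mu * Pk k - pp mu \<noteq> 12 \<and> 3 * qq mu * Pk k - pp mu \<noteq> -12"
        using fam2[OF ow _, of u k] False uw unfolding eqn by simp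
      have e: "qq mu = 2^(w+1) \<and> (w = 0 \<longleftrightarrow> mu = [1])" using qv mu uw by simp
      have p0: "pp mu > 0" unfolding pv using pos by (intro add_pos_pos mult_pos_pos) simp_all
      have e': "\<exists>e. qq mu = 2^(e+1) \<and> (e = 0 \<longleftrightarrow> mu = [1])" using e by (intro exI[of _ w])
      have v1: "mu = [1] \<longrightarrow> pp mu = 6 \<and> qq mu = 2" "mu = [3] \<longrightarrow> pp mu = 36 \<and> qq mu = 8" using mu by simp_all
      have r3': "mu \<noteq> [1] \<longrightarrow> mu \<noteq> [3] \<longrightarrow> pp mu - 3 * qq mu > 12" using r3 by simp
      have r4': "mu \<noteq> [1] \<longrightarrow> odd k \<longrightarrow> 3 * qq mu * Pk k - pp mu \<noteq> 12 \<and> 3 * qq mu * Pk k - pp mu \<noteq> -12" using r4 by simp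
      show ?thesis by (intro conjI; (rule e' | rule p0 | rule v1 | rule r3' | rule r4'))
    qed
  qed
  then show ?thesis .
qed

lemma K3:
  assumes p: "is_partition mu" and l: "length mu = 3" and o: "odd (sum_list mu)"
  shows "\<exists>P Q. pp mu = 6*P \<and> qq mu = -2*Q \<and> (4::int) dvd P - Q \<and> (mu = [1,1,1] \<longrightarrow> P = 1 \<and> Q = 1)
    \<and> (mu \<noteq> [1,1,1] \<longrightarrow> P + Q \<ge> 4)
    \<and> (odd Q \<longrightarrow> mu = [1,1,1] \<or> (\<exists>k>0. (odd k \<and> Q = -1 \<and> P = Pk k) \<or> (even k \<and> Q > 0 \<and> P > 0)))"
proof -
  obtain a b c where mu: "mu = [a,b,c]" and abc: "a \<ge> b" "b \<ge> c" "c > 0" "odd (a+b+c)"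
    using shapes[OF p _ o] l by auto
  define P where "P = s3 [a-1,b-1,c-1] 1 2 3"
  define Q where "Q = s3 [a-1,b-1,c-1] 1 2 (-1)"
  have pv: "pp mu = 6*P" using s3_shift[of a b c 1 2 3] abc by (simp add: pp_def mu pad3_3 P_def)
  have qv: "qq mu = -2*Q" using s3_shift[of a b c 1 2 "-1"] abc by (simp add: qq_def mu pad3_3 Q_def)
  have d: "(4::int) dvd P - Q" unfolding P_def Q_def by (rule T1)
  have v1: "mu = [1,1,1] \<longrightarrow> P = 1 \<and> Q = 1" by (simp add: mu P_def Q_def s3_000)
  have v2: "mu \<noteq> [1,1,1] \<longrightarrow> P + Q \<ge> 4"
  proof
    assume "mu \<noteq> [1,1,1]"
    then have "a - 1 \<ge> 1" using mu abc by auto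
    then show "P + Q \<ge> 4" unfolding P_def Q_def by (rule T2)
  qed
  have v3: "odd Q \<longrightarrow> mu = [1,1,1] \<or> (\<exists>k>0. (odd k \<and> Q = -1 \<and> P = Pk k) \<or> (even k \<and> Q > 0 \<and> P > 0))"
  proof
    assume oq: "odd Q"
    have ev: "even ((a-1) + (b-1) + (c-1))" using abc by presburger
    have "(a-1 = 0 \<and> b-1 = 0 \<and> c-1 = 0) \<or> (c-1 = 0 \<and> a-1 = b-1 \<and> a-1 > 0)"
      using T3[of "b-1" "a-1" "c-1"] abc ev oq unfolding Q_def by auto
    then show "mu = [1,1,1] \<or> (\<exists>k>0. (odd k \<and> Q = -1 \<and> P = Pk k) \<or> (even k \<and> Q > 0 \<and> P > 0))"
    proof
      assume "a-1 = 0 \<and> b-1 = 0 \<and> c-1 = 0"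
      then show ?thesis using mu abc by auto
    next
      assume h: "c-1 = 0 \<and> a-1 = b-1 \<and> a-1 > 0"
      define k where "k = a - 1"
      have k0: "k > 0" using h unfolding k_def by linarith
      have r: "[a-1,b-1,c-1] = [k,k,0]" using h k_def by simp
      have Pv: "P = Pk k" unfolding P_def r using s3_kk[OF k0, of 1 2 3] by (simp add: Pk_def)
      have Qv: "Q = 2^k + (-1)^k + (-2)^k" unfolding Q_def r using s3_kk[OF k0, of 1 2 "-1"] by simp
      show ?thesis
      proof (cases "odd k")
        case True
        then have "Q = -1" using Qv by simp
        then show ?thesis using True Pv k0 by blast
      next
        case False
        then have "Q > 0" using Qv by simp
        moreover have "P > 0" using Pv by (simp add: Pk_def add_pos_pos)
        ultimately show ?thesis using False k0 by blast
      qed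
    qed
  qed
  show ?thesis using pv qv d v1 v2 v3 by blast
qed

lemma integ: "length mu \<le> 3 \<Longrightarrow> odd (sum_list mu) \<Longrightarrow> (4::int) dvd pp mu + 3 * qq mu"
proof -
  assume l: "length mu \<le> 3" and o: "odd (sum_list mu)"
  have "pp mu + 3 * qq mu = 4 * (3 * Acf mu)" using AB(1)[OF l o] by simp
  then show ?thesis by simp
qed

lemma K1_four:
  assumes p: "is_partition mu" and l: "length mu \<le> 2" and o: "odd (sum_list mu)" and ne: "mu \<noteq> [1]"
  shows "(4::int) dvd qq mu \<and> (4::int) dvd pp mu \<and> qq mu \<ge> 4"
proof -
  obtain e where e: "qq mu = 2^(e+1)" "e = 0 \<longleftrightarrow> mu = [1]" using K1[OF p l o] by blast
  then have e1: "e \<ge> 1" using ne by simp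
  have q: "qq mu = 4 * 2^(e-1)"
  proof -
    have "e + 1 = (e - 1) + 2" using e1 by simp
    then have "qq mu = 2^((e-1)+2)" using e(1) by metis
    then show ?thesis by (simp add: power_add)
  qed
  have "(4::int) dvd pp mu + 3 * qq mu" using integ l o by simp
  moreover have "(4::int) dvd 3 * qq mu" using q by simp
  ultimately have "(4::int) dvd pp mu" using dvd_add_left_iff by blast
  moreover have "qq mu \<ge> 4" using q by simp
  ultimately show ?thesis using q by simp
qed

definition NN :: "nat list \<Rightarrow> nat list \<Rightarrow> int" where "NN mu nu = qq mu * pp nu - pp mu * qq nu"

lemma not24_16: "(16::int) dvd x \<Longrightarrow> \<bar>x\<bar> \<noteq> 24"
proof
  assume d: "(16::int) dvd x" and a: "\<bar>x\<bar> = 24"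
  then have "x = 24 \<or> x = -24" by arith
  then show False using d by auto
qed

lemma NT11:
  assumes pm: "is_partition mu" "length mu \<le> 2" "odd (sum_list mu)"
    and pn: "is_partition nu" "length nu \<le> 2" "odd (sum_list nu)" and ne: "mu \<noteq> nu"
  shows "\<bar>NN mu nu\<bar> = 24 \<longleftrightarrow> {mu,nu} = {[1],[3]}"
proof -
  have Km: "pp mu > 0" "mu = [1] \<longrightarrow> pp mu = 6 \<and> qq mu = 2" "mu = [3] \<longrightarrow> pp mu = 36 \<and> qq mu = 8"
     "mu \<noteq> [1] \<longrightarrow> mu \<noteq> [3] \<longrightarrow> pp mu - 3 * qq mu > 12" using K1[OF pm] by blast+
  have Kn: "pp nu > 0" "nu = [1] \<longrightarrow> pp nu = 6 \<and> qq nu = 2" "nu = [3] \<longrightarrow> pp nu = 36 \<and> qq nu = 8"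
     "nu \<noteq> [1] \<longrightarrow> nu \<noteq> [3] \<longrightarrow> pp nu - 3 * qq nu > 12" using K1[OF pn] by blast+
  show ?thesis
  proof (cases "mu = [1]")
    case True
    then have nu1: "nu \<noteq> [1]" using ne by simp
    show ?thesis
    proof (cases "nu = [3]")
      case True then show ?thesis using \<open>mu = [1]\<close> Km Kn by (simp add: NN_def)
    next
      case False
      have "NN mu nu = 2 * (pp nu - 3 * qq nu)" using \<open>mu = [1]\<close> Km by (simp add: NN_def algebra_simps)
      then have "NN mu nu > 24" using Kn(4) nu1 False by simp
      moreover have "{mu,nu} \<noteq> {[1],[3]}" using nu1 False by (auto simp: doubleton_eq_iff)
      ultimately show ?thesis by simp
    qed
  next
    case False
    note mu1 = False
    show ?thesis
    proof (cases "nu = [1]")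
      case True
      show ?thesis
      proof (cases "mu = [3]")
        case True then show ?thesis using \<open>nu = [1]\<close> Km Kn by (simp add: NN_def insert_commute)
      next
        case False
        have "NN mu nu = - 2 * (pp mu - 3 * qq mu)" using \<open>nu = [1]\<close> Kn by (simp add: NN_def algebra_simps)
        then have "NN mu nu < - 24" using Km(4) mu1 False by simp
        moreover have "{mu,nu} \<noteq> {[1],[3]}" using mu1 False by (auto simp: doubleton_eq_iff)
        ultimately show ?thesis by simp
      qed
    next
      case False
      have a: "(4::int) dvd qq mu \<and> (4::int) dvd pp mu" using K1_four[OF pm mu1] by simp
      have b: "(4::int) dvd qq nu \<and> (4::int) dvd pp nu" using K1_four[OF pn False] by simp
      obtain a1 a2 where "qq mu = 4*a1" "pp mu = 4*a2" using a by (auto elim!: dvdE)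
      moreover obtain b1 b2 where "qq nu = 4*b1" "pp nu = 4*b2" using b by (auto elim!: dvdE)
      ultimately have "NN mu nu = 16 * (a1*b2 - a2*b1)" by (simp add: NN_def algebra_simps)
      then have "\<bar>NN mu nu\<bar> \<noteq> 24" by (intro not24_16) simp
      moreover have "{mu,nu} \<noteq> {[1],[3]}" using mu1 False by (auto simp: doubleton_eq_iff)
      ultimately show ?thesis by simp
    qed
  qed
qed

lemma NT13:
  assumes pm: "is_partition mu" "length mu \<le> 2" "odd (sum_list mu)"
    and pn: "is_partition nu" "length nu = 3" "odd (sum_list nu)"
  shows "\<bar>NN mu nu\<bar> = 24 \<longleftrightarrow> (mu = [1] \<and> nu = [1,1,1])"
proof -
  obtain P Q where PQ: "pp nu = 6*P" "qq nu = -2*Q" "(4::int) dvd P - Q" "nu = [1,1,1] \<longrightarrow> P = 1 \<and> Q = 1"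
    "nu \<noteq> [1,1,1] \<longrightarrow> P + Q \<ge> 4"
    "odd Q \<longrightarrow> nu = [1,1,1] \<or> (\<exists>k>0. (odd k \<and> Q = -1 \<and> P = Pk k) \<or> (even k \<and> Q > 0 \<and> P > 0))"
    using K3[OF pn] by blast
  have K: "pp mu > 0" "mu = [1] \<longrightarrow> pp mu = 6 \<and> qq mu = 2"
    "\<And>k. mu \<noteq> [1] \<longrightarrow> odd k \<longrightarrow> 3 * qq mu * Pk k - pp mu \<noteq> 12 \<and> 3 * qq mu * Pk k - pp mu \<noteq> -12"
    using K1[OF pm] by blast+
  have N: "NN mu nu = 6 * qq mu * P + 2 * pp mu * Q" using PQ by (simp add: NN_def)
  show ?thesis
  proof (cases "nu = [1,1,1]")
    case True
    then have N1: "NN mu nu = 6 * qq mu + 2 * pp mu" using N PQ(4) by simp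
    show ?thesis
    proof (cases "mu = [1]")
      case True then show ?thesis using N1 K(2) \<open>nu = [1,1,1]\<close> by simp
    next
      case False
      then have "qq mu \<ge> 4" using K1_four[OF pm] by simp
      then have "NN mu nu > 24" using N1 K(1) by simp
      then show ?thesis using False by simp
    qed
  next
    case False
    note nu1 = False
    have "\<bar>NN mu nu\<bar> \<noteq> 24"
    proof (cases "mu = [1]")
      case True
      then have "NN mu nu = 12 * (P + Q)" using N K(2) by (simp add: algebra_simps)
      then show ?thesis using PQ(5) nu1 by simp
    next
      case False
      note mu1 = False
      have a: "(4::int) dvd qq mu \<and> (4::int) dvd pp mu \<and> qq mu \<ge> 4" using K1_four[OF pm mu1] by simp
      show ?thesis
      proof (cases "even Q")
        case True
        obtain c where c: "Q = 2*c" using True by (auto elim!: evenE)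
        obtain d where d: "P - Q = 4*d" using PQ(3) by (auto elim!: dvdE)
        obtain a1 a2 where a12: "qq mu = 4*a1" "pp mu = 4*a2" using a by (auto elim!: dvdE)
        have "P = 2*c + 4*d" using c d by simp
        then have "NN mu nu = 16 * (3*a1*c + 6*a1*d + a2*c)" using N c a12 by (simp add: algebra_simps)
        then show ?thesis by (intro not24_16) simp
      next
        case False
        then obtain k where k: "k > 0" "(odd k \<and> Q = -1 \<and> P = Pk k) \<or> (even k \<and> Q > 0 \<and> P > 0)"
          using PQ(6) nu1 by blast
        show ?thesis
        proof (cases "odd k")
          case True
          then have QP: "Q = -1" "P = Pk k" using k(2) by auto
          have "NN mu nu = 2 * (3 * qq mu * Pk k - pp mu)" using N QP by (simp add: algebra_simps)
          moreover have "3 * qq mu * Pk k - pp mu \<noteq> 12 \<and> 3 * qq mu * Pk k - pp mu \<noteq> -12" using K(3)[of k] mu1 True by simp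
          ultimately show ?thesis by auto
        next
          case False
          then have QP: "Q > 0" "P > 0" using k(2) by auto
          have "qq mu * P \<ge> 4 * 1" using a QP(2) by (intro mult_mono) auto
          moreover have "pp mu * Q > 0" using K(1) QP(1) by simp
          ultimately have "NN mu nu > 24" using N by simp
          then show ?thesis by simp
        qed
      qed
    qed
    then show ?thesis using nu1 by simp
  qed
qed

lemma NT33:
  assumes pm: "is_partition mu" "length mu = 3" "odd (sum_list mu)"
    and pn: "is_partition nu" "length nu = 3" "odd (sum_list nu)"
  shows "\<bar>NN mu nu\<bar> \<noteq> 24"
proof -
  obtain P Q where PQ: "pp mu = 6*P" "qq mu = -2*Q" "(4::int) dvd P - Q" using K3[OF pm] by blast
  obtain P' Q' where PQ': "pp nu = 6*P'" "qq nu = -2*Q'" "(4::int) dvd P' - Q'" using K3[OF pn] by blast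
  obtain s where s: "P - Q = 4*s" using PQ(3) by (auto elim!: dvdE)
  obtain t where t: "P' - Q' = 4*t" using PQ'(3) by (auto elim!: dvdE)
  have "P = Q + 4*s" "P' = Q' + 4*t" using s t by simp_all
  then have "NN mu nu = 16 * (3 * (s*Q' - t*Q))" using PQ PQ' by (simp add: NN_def algebra_simps)
  then show ?thesis by (intro not24_16) simp
qed


theorem lemma3p4:
  assumes "is_partition mu" and "is_partition nu" and "mu \<noteq> nu"
    and "odd (sum_list mu)" and "odd (sum_list nu)"
    and "length mu \<le> 3" and "length nu \<le> 3"
  shows "Zspan2 (m_JM mu) (m_JM nu) = Zspan2 C1 C3 \<longleftrightarrow>
           {mu, nu} = {[1], [1,1,1]} \<or> {mu, nu} = {[1], [3]}"
proof -
  note pm = assms(1) and pn = assms(2) and ne = assms(3) and om = assms(4) and on = assms(5)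
    and lm = assms(6) and ln = assms(7)
  have "Zspan2 (m_JM mu) (m_JM nu) = Zspan2 C1 C3 \<longleftrightarrow> \<bar>Acf mu * Bcf nu - Acf nu * Bcf mu\<bar> = 1"
    unfolding AB(3)[OF lm om] AB(3)[OF ln on] by (rule span_iff)
  also have "\<dots> \<longleftrightarrow> \<bar>NN mu nu\<bar> = 24"
  proof -
    have "144 * (Acf mu * Bcf nu - Acf nu * Bcf mu) = (12 * Acf mu) * (12 * Bcf nu) - (12 * Acf nu) * (12 * Bcf mu)"
      by (simp add: algebra_simps)
    also have "\<dots> = 6 * NN mu nu"
      unfolding AB(1)[OF lm om] AB(2)[OF lm om] AB(1)[OF ln on] AB(2)[OF ln on] by (simp add: NN_def algebra_simps)
    finally have "24 * (Acf mu * Bcf nu - Acf nu * Bcf mu) = NN mu nu" by simp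
    then show ?thesis by auto
  qed
  also have "\<dots> \<longleftrightarrow> {mu, nu} = {[1], [1,1,1]} \<or> {mu, nu} = {[1], [3]}"
  proof (cases "length mu \<le> 2")
    case True
    note m2 = True
    show ?thesis
    proof (cases "length nu \<le> 2")
      case True
      have "{mu, nu} \<noteq> {[1], [1,1,1]}" using m2 True by (auto simp: doubleton_eq_iff)
      then show ?thesis using NT11[OF pm m2 om pn True on ne] by simp
    next
      case False
      then have n3: "length nu = 3" using ln by simp
      have "{mu, nu} \<noteq> {[1], [3]}" using n3 by (auto simp: doubleton_eq_iff)
      moreover have "{mu, nu} = {[1], [1,1,1]} \<longleftrightarrow> mu = [1] \<and> nu = [1,1,1]" using m2 by (auto simp: doubleton_eq_iff)
      ultimately show ?thesis using NT13[OF pm m2 om pn n3 on] by simp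
    qed
  next
    case False
    then have m3: "length mu = 3" using lm by simp
    show ?thesis
    proof (cases "length nu \<le> 2")
      case True
      have "{mu, nu} \<noteq> {[1], [3]}" using m3 by (auto simp: doubleton_eq_iff)
      moreover have "{mu, nu} = {[1], [1,1,1]} \<longleftrightarrow> nu = [1] \<and> mu = [1,1,1]" using True by (auto simp: doubleton_eq_iff)
      moreover have "NN mu nu = - NN nu mu" by (simp add: NN_def algebra_simps)
      ultimately show ?thesis using NT13[OF pn True on pm m3 om] by simp
    next
      case False
      then have n3: "length nu = 3" using ln by simp
      have "{mu, nu} \<noteq> {[1], [3]}" "{mu, nu} \<noteq> {[1], [1,1,1]}" using n3 m3 by (auto simp: doubleton_eq_iff)
      then show ?thesis using NT33[OF pm m3 om pn n3 on] by simp
    qed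
  qed
  finally show ?thesis .
qed


end
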